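(* Let $T$ be a $\pi$-increasing tree whose vertex-set $\mathcal{S}$ consists of two or more blocks of $\pi$; let $M$ be its maximum vertex and $m=\max(\mathcal{S}\setminus\pi^M)$ its second maximum vertex. (a) If $T$ is reducible, then $T$ can be written uniquely as $T=\mathrm{spl}(T_1,M;T_2,t)$ where $T_1,T_2$ are $\pi$-increasing trees such that $M$ is a vertex of $T_1$, $t$ is a vertex of $T_2$, and $T_1$ is irreducible. Moreover, if $1$ is a vertex of $T$, then $1$ is a vertex of $T_2$. (b) If $T$ is irreducible, then $T$ can be written uniquely as $T=\mathrm{spl}(T_1,m;T_2,t)$ where $T_1,T_2$ are $\pi$-increasing trees such that $m$ is a vertex of $T_1$, $t$ and $M$ are vertices of $T_2$ with $t<m$, and $T_1$ and $T_2$ are both irreducible.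
   Context: Standing assumptions: $r\ge2$ and $\pi$ is a set partition of $\{1,\dots,r\}$ having $\{1\}$ as a block; its blocks are $\pi_i$ with maxima $\mu_i$; $\pi^x$ denotes the block containing $x$. An unordered increasing tree is a rooted tree on distinct positive integers, sons unordered, each son larger than its father. A $\pi$-increasing tree is an unordered increasing tree $T$ whose vertex-set is a union of blocks of $\pi$ and such that for any two elements $i<j$ of a same block of $\pi$ contained in $V(T)$, $i$ is an ancestor of $j$ in $T$. $v$-decomposition: for a vertex $v$ of $T$ with chain $a_1<\dots<a_\ell=v$ from the root to $v$, removing the chain edges leaves components $T^{(a_j)}$ rooted at $a_j$. Splice: for unordered increasing trees $T_1,T_2$ with disjoint vertex-sets and $v_1\in V(T_1)$, $v_2\in V(T_2)$, $v_1>v_2$, $\mathrm{spl}(T_1,v_1;T_2,v_2)$ is the tree on $V(T_1)\cup V(T_2)$ obtained by merging the root-to-$v_1$ chain of $T_1$ and the root-to-$v_2$ chain of $T_2$ into one increasing chain (ending at $v_1$) and attaching at each chain vertex its component from the $v_1$-decomposition of $T_1$ or the $v_2$-decomposition of $T_2$. $v$-dependence graph $G_v(T)$: directed graph on the blocks of $\pi$ contained in $V(T)$; for each such block $\pi_i$ whose maximum $\mu_i$ is not on the chain $a_1,\dots,a_\ell$, $\mu_i$ is a non-root vertex of a unique $T^{(a_j)}$ and there is an edge (possibly a loop) $\pi_i\to\pi^{a_j}$; no other edges. A $\pi$-increasing tree with maximum vertex $M$ is irreducible if $G_M(T)$ is connected (ignoring directions), reducible otherwise. *)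

theory Defs
  imports Main "HOL-Library.Disjoint_Sets"
begin

text \<open>A rooted unordered tree on positive integers is represented by its vertex set
  and its set of edges (father, son).  Equality of trees is equality of these pairs,
  which is the right notion for unordered (unlabelled-order) trees.\<close>

type_synonym tree = "nat set \<times> (nat \<times> nat) set"

abbreviation verts :: "tree \<Rightarrow> nat set" where "verts T \<equiv> fst T"
abbreviation edges :: "tree \<Rightarrow> (nat \<times> nat) set" where "edges T \<equiv> snd T"

text \<open>Following fathers strictly
  decreases, so this forces a tree rooted at the minimum.\<close>
definition inc_tree :: "tree \<Rightarrow> bool" where
  "inc_tree T \<longleftrightarrow> finite (verts T) \<and> verts T \<noteq> {} \<and> 0 \<notin> verts T
     \<and> edges T \<subseteq> verts T \<times> verts T
     \<and> (\<forall>(a,b)\<in>edges T. a < b)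
     \<and> (\<forall>v\<in>verts T. v \<noteq> Min (verts T) \<longrightarrow> (\<exists>!a. (a,v) \<in> edges T))"

definition std_partition :: "nat \<Rightarrow> nat set set \<Rightarrow> bool" where
  "std_partition r P \<longleftrightarrow> r \<ge> 2 \<and> partition_on {1..r} P \<and> {1} \<in> P"

definition blk :: "nat set set \<Rightarrow> nat \<Rightarrow> nat set" where
  "blk P x = (THE B. B \<in> P \<and> x \<in> B)"

definition blocks_in :: "nat set set \<Rightarrow> nat set \<Rightarrow> nat set set" where
  "blocks_in P S = {B \<in> P. B \<subseteq> S}"

definition pi_inc_tree :: "nat set set \<Rightarrow> tree \<Rightarrow> bool" where
  "pi_inc_tree P T \<longleftrightarrow> inc_tree T
     \<and> verts T = \<Union>(blocks_in P (verts T))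
     \<and> (\<forall>B\<in>blocks_in P (verts T). \<forall>i\<in>B. \<forall>j\<in>B. i < j \<longrightarrow> (i,j) \<in> (edges T)\<^sup>+)"

definition chain :: "tree \<Rightarrow> nat \<Rightarrow> nat set" where
  "chain T v = {a \<in> verts T. (a,v) \<in> (edges T)\<^sup>*}"

definition chain_edges :: "tree \<Rightarrow> nat \<Rightarrow> (nat \<times> nat) set" where
  "chain_edges T v = {(a,b) \<in> edges T. a \<in> chain T v \<and> b \<in> chain T v}"

text \<open>Vertex set of the component $T^{(a)}$ of the v-decomposition (a on the chain).\<close>
definition comp_verts :: "tree \<Rightarrow> nat \<Rightarrow> nat \<Rightarrow> nat set" where
  "comp_verts T v a = {x. (a,x) \<in> (edges T - chain_edges T v)\<^sup>*}"

definition spl :: "tree \<Rightarrow> nat \<Rightarrow> tree \<Rightarrow> nat \<Rightarrow> tree" where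
  "spl T1 v1 T2 v2 =
     (let C = chain T1 v1 \<union> chain T2 v2 in
      (verts T1 \<union> verts T2,
       (edges T1 - chain_edges T1 v1) \<union> (edges T2 - chain_edges T2 v2)
       \<union> {(a,b). a \<in> C \<and> b \<in> C \<and> a < b \<and> \<not>(\<exists>c\<in>C. a < c \<and> c < b)}))"

text \<open>Edges of the v-dependence graph $G_v(T)$ (nodes: blocks_in P (verts T)).\<close>
definition dep_edges :: "nat set set \<Rightarrow> tree \<Rightarrow> nat \<Rightarrow> (nat set \<times> nat set) set" where
  "dep_edges P T v =
     {(B, blk P a) | B a. B \<in> blocks_in P (verts T) \<and> Max B \<notin> chain T v
        \<and> a \<in> chain T v \<and> Max B \<in> comp_verts T v a}"

definition dep_connected :: "nat set set \<Rightarrow> tree \<Rightarrow> nat \<Rightarrow> bool" where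
  "dep_connected P T v \<longleftrightarrow>
     (\<forall>B1\<in>blocks_in P (verts T). \<forall>B2\<in>blocks_in P (verts T).
        (B1,B2) \<in> (dep_edges P T v \<union> (dep_edges P T v)\<inverse>)\<^sup>*)"

definition irreducible_tree :: "nat set set \<Rightarrow> tree \<Rightarrow> bool" where
  "irreducible_tree P T \<longleftrightarrow> pi_inc_tree P T \<and> dep_connected P T (Max (verts T))"

definition reducible_tree :: "nat set set \<Rightarrow> tree \<Rightarrow> bool" where
  "reducible_tree P T \<longleftrightarrow> pi_inc_tree P T \<and> \<not> dep_connected P T (Max (verts T))"

end

theory Submission
  imports Defs
begin

definition par :: "tree \<Rightarrow> nat \<Rightarrow> nat" where
  "par T y = (THE a. (a,y) \<in> edges T)"
definition anc :: "tree \<Rightarrow> nat \<Rightarrow> nat set" where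
  "anc T y = {x. (x,y) \<in> (edges T)\<^sup>*}"
definition anch :: "tree \<Rightarrow> nat \<Rightarrow> nat \<Rightarrow> nat" where
  "anch T v x = Max (chain T v \<inter> anc T x)"

locale itree = fixes T :: tree assumes it: "inc_tree T"
begin

abbreviation "V \<equiv> verts T"
abbreviation "E \<equiv> edges T"
definition "rt = Min V"

lemma finV: "finite V" and neV: "V \<noteq> {}" and EV: "E \<subseteq> V \<times> V"
  and Eless: "(a,b) \<in> E \<Longrightarrow> a < b"
  and uniq: "v \<in> V \<Longrightarrow> v \<noteq> rt \<Longrightarrow> \<exists>!a. (a,v) \<in> E"
  and zero: "0 \<notin> V"
  using it unfolding inc_tree_def rt_def by auto

lemma rt_in: "rt \<in> V" using finV neV rt_def by simp
lemma rt_le: "x \<in> V \<Longrightarrow> rt \<le> x" using finV rt_def by simp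

lemma edge_in: "(a,b) \<in> E \<Longrightarrow> a \<in> V \<and> b \<in> V" using EV by auto

lemma par_unique: assumes "(a,y) \<in> E" shows "par T y = a"
proof -
  have "y \<in> V" "a \<in> V" "a < y" using assms edge_in Eless by auto
  hence "y \<noteq> rt" using rt_le by force
  with \<open>y \<in> V\<close> have "\<exists>!a. (a,y) \<in> E" by (rule uniq)
  thus ?thesis using assms unfolding par_def by (rule the1_equality)
qed

lemma par_edge: assumes "y \<in> V" "y \<noteq> rt" shows "(par T y, y) \<in> E"
proof -
  obtain a where "(a,y) \<in> E" using uniq[OF assms] by blast
  thus ?thesis using par_unique by simp
qed

lemma par_less: "y \<in> V \<Longrightarrow> y \<noteq> rt \<Longrightarrow> par T y < y"
  using par_edge Eless by blast
lemma par_in: "y \<in> V \<Longrightarrow> y \<noteq> rt \<Longrightarrow> par T y \<in> V"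
  using par_edge edge_in by blast

lemma no_edge_rt: "(a,rt) \<notin> E"
  using Eless edge_in rt_le by fastforce

lemma rtr_le: "(x,y) \<in> E\<^sup>* \<Longrightarrow> x \<le> y"
  by (induction rule: rtrancl_induct) (auto dest: Eless)

lemma tr_less: "(x,y) \<in> E\<^sup>+ \<Longrightarrow> x < y"
  by (induction rule: trancl_induct) (auto dest: Eless)

lemma rtr_V: "(x,y) \<in> E\<^sup>* \<Longrightarrow> y \<in> V \<Longrightarrow> x \<in> V"
  by (induction rule: rtrancl_induct) (auto dest: edge_in)

lemma rtr_cases: "(x,y) \<in> E\<^sup>* \<longleftrightarrow> x = y \<or> (y \<in> V \<and> y \<noteq> rt \<and> (x, par T y) \<in> E\<^sup>*)"
proof
  assume "(x,y) \<in> E\<^sup>*"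
  thus "x = y \<or> (y \<in> V \<and> y \<noteq> rt \<and> (x, par T y) \<in> E\<^sup>*)"
  proof (cases rule: rtranclE)
    case (step z)
    then show ?thesis using par_unique[OF step(2)] edge_in[OF step(2)] no_edge_rt by auto
  qed simp
next
  assume "x = y \<or> (y \<in> V \<and> y \<noteq> rt \<and> (x, par T y) \<in> E\<^sup>*)"
  thus "(x,y) \<in> E\<^sup>*" using par_edge by (auto intro: rtrancl_into_rtrancl)
qed

lemma rt_anc: "y \<in> V \<Longrightarrow> (rt, y) \<in> E\<^sup>*"
proof (induction y rule: less_induct)
  case (less y)
  show ?case
  proof (cases "y = rt")
    case False
    hence "(rt, par T y) \<in> E\<^sup>*" using less par_less par_in by blast
    thus ?thesis using par_edge[OF less.prems False] by simp
  qed simp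
qed

lemma anc_comp: "(a,y) \<in> E\<^sup>* \<Longrightarrow> (b,y) \<in> E\<^sup>* \<Longrightarrow> a \<le> b \<Longrightarrow> (a,b) \<in> E\<^sup>*"
proof (induction y arbitrary: a b rule: less_induct)
  case (less y)
  show ?case
  proof (cases "b = y")
    case False
    with less.prems(2) have b: "y \<in> V" "y \<noteq> rt" "(b, par T y) \<in> E\<^sup>*" using rtr_cases[of b y] by auto
    have "a \<noteq> y" using less.prems rtr_le False by (meson le_antisym)
    hence "(a, par T y) \<in> E\<^sup>*" using less.prems(1) rtr_cases[of a y] by auto
    then show ?thesis using less.IH[of "par T y"] b less.prems(3) par_less by blast
  qed (use less in simp)
qed

lemma anc_cases: "(a,y) \<in> E\<^sup>* \<Longrightarrow> (b,y) \<in> E\<^sup>* \<Longrightarrow> (a,b) \<in> E\<^sup>* \<or> (b,a) \<in> E\<^sup>*"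
  using anc_comp[of a y b] anc_comp[of b y a] by (cases "a \<le> b") auto

lemma chain_eq: "v \<in> V \<Longrightarrow> chain T v = {a. (a,v) \<in> E\<^sup>*}"
  unfolding chain_def using rtr_V by auto

lemma rtr_V2: "(x,y) \<in> E\<^sup>* \<Longrightarrow> x \<in> V \<Longrightarrow> y \<in> V"
  by (induction rule: rtrancl_induct) (auto dest: edge_in)

lemma chain_V: "a \<in> chain T v \<Longrightarrow> v \<in> V" unfolding chain_def using rtr_V2 by auto

lemma chain_sub: "chain T v \<subseteq> V" unfolding chain_def by auto
lemma chain_fin: "finite (chain T v)" using chain_sub finV finite_subset by blast

lemma chain_closed: "a \<in> chain T v \<Longrightarrow> (b,a) \<in> E\<^sup>* \<Longrightarrow> b \<in> chain T v"
  unfolding chain_def using rtr_V by (auto intro: rtrancl_trans)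

lemma chain_comp: "a \<in> chain T v \<Longrightarrow> b \<in> chain T v \<Longrightarrow> a \<le> b \<Longrightarrow> (a,b) \<in> E\<^sup>*"
  unfolding chain_def using anc_comp[of a v b] by auto

lemma rt_chain: "v \<in> V \<Longrightarrow> rt \<in> chain T v"
  unfolding chain_def using rt_anc rt_in by auto

lemma v_chain: "v \<in> V \<Longrightarrow> v \<in> chain T v" unfolding chain_def by auto

lemma chain_le: "a \<in> chain T v \<Longrightarrow> a \<le> v" unfolding chain_def using rtr_le by auto

lemma anc_chain: assumes "a \<in> chain T v" shows "anc T a = chain T v \<inter> {..a}"
proof (rule set_eqI)
  fix x show "x \<in> anc T a \<longleftrightarrow> x \<in> chain T v \<inter> {..a}"
    unfolding anc_def using chain_closed[OF assms, of x] chain_comp[OF _ assms, of x] rtr_le[of x a] by auto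
qed

lemma anc_sub: "y \<in> V \<Longrightarrow> anc T y \<subseteq> V" unfolding anc_def using rtr_V by auto

lemma anc_rec: assumes "y \<in> V" "y \<noteq> rt" shows "anc T y = insert y (anc T (par T y))"
proof (rule set_eqI)
  fix x show "x \<in> anc T y \<longleftrightarrow> x \<in> insert y (anc T (par T y))"
    unfolding anc_def using rtr_cases[of x y] assms by auto
qed

lemma anc_rt: "anc T rt = {rt}"
  unfolding anc_def using rtr_le rtr_V rt_le rt_in by (auto intro: antisym)

lemma anch_props: assumes "v \<in> V" "x \<in> V"
  shows "anch T v x \<in> chain T v" "(anch T v x, x) \<in> E\<^sup>*"
    "\<And>z. z \<in> chain T v \<Longrightarrow> (z,x) \<in> E\<^sup>* \<Longrightarrow> z \<le> anch T v x"
proof -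
  let ?S = "chain T v \<inter> anc T x"
  have "rt \<in> ?S" using rt_chain rt_anc assms unfolding anc_def by auto
  moreover have "finite ?S" using chain_fin by auto
  ultimately have "Max ?S \<in> ?S" "\<And>z. z \<in> ?S \<Longrightarrow> z \<le> Max ?S"
    using Max_in[of ?S] by auto
  thus "anch T v x \<in> chain T v" "(anch T v x, x) \<in> E\<^sup>*"
    "\<And>z. z \<in> chain T v \<Longrightarrow> (z,x) \<in> E\<^sup>* \<Longrightarrow> z \<le> anch T v x"
    unfolding anch_def anc_def by auto
qed

lemma anch_chain: assumes "x \<in> chain T v" shows "anch T v x = x"
proof -
  have "v \<in> V" using assms chain_V by auto
  have "x \<in> V" using assms chain_sub by auto
  have "x \<le> anch T v x" using anch_props(3)[OF \<open>v \<in> V\<close> \<open>x \<in> V\<close> assms] by simp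
  moreover have "anch T v x \<le> x" using anch_props(2)[OF \<open>v \<in> V\<close> \<open>x \<in> V\<close>] rtr_le by blast
  ultimately show ?thesis by simp
qed

lemma anch_desc: assumes "v \<in> V" "(x,y) \<in> E\<^sup>*" "y \<in> V" "x \<notin> chain T v"
  shows "y \<notin> chain T v" "anch T v y = anch T v x"
proof -
  show "y \<notin> chain T v" using assms chain_closed by blast
  have xV: "x \<in> V" using assms rtr_V by auto
  have "chain T v \<inter> anc T y = chain T v \<inter> anc T x"
  proof (rule set_eqI, rule iffI)
    fix z assume z: "z \<in> chain T v \<inter> anc T y"
    hence "(z,y) \<in> E\<^sup>*" unfolding anc_def by auto
    from anc_cases[OF this assms(2)] have "(z,x) \<in> E\<^sup>* \<or> (x,z) \<in> E\<^sup>*" .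
    moreover have "(x,z) \<notin> E\<^sup>*" using z chain_closed assms(4) by blast
    ultimately show "z \<in> chain T v \<inter> anc T x" using z unfolding anc_def by auto
  next
    fix z assume "z \<in> chain T v \<inter> anc T x"
    thus "z \<in> chain T v \<inter> anc T y" using assms(2) unfolding anc_def by auto
  qed
  thus "anch T v y = anch T v x" unfolding anch_def by simp
qed

lemma anch_par: assumes "v \<in> V" "x \<in> V" "x \<notin> chain T v"
  shows "anch T v x = (if par T x \<in> chain T v then par T x else anch T v (par T x))"
proof -
  have xr: "x \<noteq> rt" using rt_chain assms by auto
  have "chain T v \<inter> anc T x = chain T v \<inter> anc T (par T x)"
    using anc_rec[OF assms(2) xr] assms(3) by auto
  hence e: "anch T v x = anch T v (par T x)" unfolding anch_def by simp
  show ?thesis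
  proof (cases "par T x \<in> chain T v")
    case True thus ?thesis using e anch_chain by simp
  qed (use e in simp)
qed

lemma anch_le: "v \<in> V \<Longrightarrow> x \<in> V \<Longrightarrow> anch T v x \<le> x"
  using anch_props(2) rtr_le by blast

end

definition consec :: "nat set \<Rightarrow> (nat \<times> nat) set" where
  "consec C = {(a,b). a \<in> C \<and> b \<in> C \<and> a < b \<and> \<not>(\<exists>c\<in>C. a < c \<and> c < b)}"

definition restr :: "tree \<Rightarrow> nat \<Rightarrow> nat set \<Rightarrow> tree" where
  "restr T v W = (W, {(a,b) \<in> edges T. b \<in> W - chain T v} \<union> consec (chain T v \<inter> W))"

lemma spl_eq: "spl T1 v1 T2 v2 = (verts T1 \<union> verts T2,
       (edges T1 - chain_edges T1 v1) \<union> (edges T2 - chain_edges T2 v2)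
       \<union> consec (chain T1 v1 \<union> chain T2 v2))"
  unfolding spl_def consec_def Let_def by simp

context itree begin

lemma chain_anc: "v \<in> V \<Longrightarrow> chain T v = anc T v"
  unfolding anc_def using chain_eq by simp

lemma chain_edges_eq: "chain_edges T v = {(a,b) \<in> E. b \<in> chain T v}"
  unfolding chain_edges_def using chain_closed by blast

lemma comp_char1:
  assumes v: "v \<in> V" and a: "a \<in> chain T v" and p: "(a,x) \<in> (E - chain_edges T v)\<^sup>*"
  shows "x = a \<or> (x \<in> V \<and> x \<notin> chain T v \<and> anch T v x = a)"
  using p
proof (induction rule: rtrancl_induct)
  case (step y z)
  have yz: "(y,z) \<in> E" "(y,z) \<notin> chain_edges T v" using step by auto
  have py: "par T z = y" using par_unique[OF yz(1)] .
  have zV: "z \<in> V" using edge_in[OF yz(1)] by auto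
  have zC: "z \<notin> chain T v" using yz chain_edges_eq by auto
  have "anch T v z = (if y \<in> chain T v then y else anch T v y)"
    using anch_par[OF v zV zC] py by simp
  then show ?case using step.IH a zV zC by auto
qed simp

lemma comp_char2:
  assumes v: "v \<in> V" and a: "a \<in> chain T v"
  shows "x \<in> V \<Longrightarrow> x \<notin> chain T v \<Longrightarrow> anch T v x = a \<Longrightarrow> (a,x) \<in> (E - chain_edges T v)\<^sup>*"
proof (induction x rule: less_induct)
  case (less x)
  have xr: "x \<noteq> rt" using rt_chain[OF v] less.prems by auto
  have e: "(par T x, x) \<in> E - chain_edges T v"
    using par_edge[OF less.prems(1) xr] less.prems(2) chain_edges_eq by auto
  show ?case
  proof (cases "par T x \<in> chain T v")
    case True
    hence "par T x = a" using anch_par[OF v less.prems(1,2)] less.prems(3) by simp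
    thus ?thesis using e by auto
  next
    case False
    hence "anch T v (par T x) = a" using anch_par[OF v less.prems(1,2)] less.prems(3) by simp
    hence "(a, par T x) \<in> (E - chain_edges T v)\<^sup>*"
      using less.IH[of "par T x"] par_less[OF less.prems(1) xr] par_in[OF less.prems(1) xr] False by blast
    thus ?thesis using e by (meson rtrancl.rtrancl_into_rtrancl)
  qed
qed

lemma comp_char:
  assumes "v \<in> V" "a \<in> chain T v" "x \<notin> chain T v"
  shows "x \<in> comp_verts T v a \<longleftrightarrow> x \<in> V \<and> anch T v x = a"
  using comp_char1[OF assms(1,2), of x] comp_char2[OF assms(1,2), of x] assms(2,3)
  unfolding comp_verts_def by auto

lemma consec_edges: assumes v: "v \<in> V"
  shows "{(a,b) \<in> E. b \<in> chain T v} = consec (chain T v)"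
proof (rule set_eqI, rule iffI)
  fix e assume "e \<in> {(a,b) \<in> E. b \<in> chain T v}"
  then obtain a b where e: "e = (a,b)" "(a,b) \<in> E" "b \<in> chain T v" by auto
  have a: "a \<in> chain T v" using chain_closed[OF e(3), of a] e(2) by auto
  have ab: "a < b" using Eless e(2) by auto
  have pb: "par T b = a" using par_unique e(2) by auto
  have bV: "b \<in> V" "b \<noteq> rt" using edge_in[OF e(2)] no_edge_rt e(2) by auto
  have "\<not>(\<exists>c\<in>chain T v. a < c \<and> c < b)"
  proof
    assume "\<exists>c\<in>chain T v. a < c \<and> c < b"
    then obtain c where c: "c \<in> chain T v" "a < c" "c < b" by auto
    have "(c,b) \<in> E\<^sup>*" using chain_comp[OF c(1) e(3)] c by auto
    hence "(c, a) \<in> E\<^sup>*" using rtr_cases[of c b] c pb by auto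
    thus False using rtr_le[of c a] c by auto
  qed
  thus "e \<in> consec (chain T v)" unfolding consec_def using e a ab by auto
next
  fix e assume "e \<in> consec (chain T v)"
  then obtain a b where e: "e = (a,b)" "a \<in> chain T v" "b \<in> chain T v" "a < b"
    and nb: "\<not>(\<exists>c\<in>chain T v. a < c \<and> c < b)" unfolding consec_def by auto
  have aV: "a \<in> V" using e chain_sub by auto
  have bV: "b \<in> V" using e chain_sub by auto
  have br: "b \<noteq> rt" using rt_le[OF aV] e by auto
  have p: "par T b \<in> chain T v" using chain_closed[OF e(3), of "par T b"] par_edge[OF bV br] by auto
  have "(a,b) \<in> E\<^sup>*" using chain_comp[OF e(2,3)] e by auto
  hence "(a, par T b) \<in> E\<^sup>*" using rtr_cases[of a b] e(4) by auto
  hence "a \<le> par T b" using rtr_le by auto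
  moreover have "par T b < b" using par_less[OF bV br] .
  ultimately have "a = par T b"
  proof -
    assume h: "a \<le> par T b" "par T b < b"
    show ?thesis
    proof (rule ccontr)
      assume "a \<noteq> par T b"
      hence "a < par T b" using h by auto
      thus False using nb p h by auto
    qed
  qed
  thus "e \<in> {(a,b) \<in> E. b \<in> chain T v}" using par_edge[OF bV br] e by auto
qed

lemma E_split: assumes v: "v \<in> V"
  shows "E = {(a,b) \<in> E. b \<notin> chain T v} \<union> consec (chain T v)"
proof -
  have "E = {(a,b) \<in> E. b \<notin> chain T v} \<union> {(a,b) \<in> E. b \<in> chain T v}" by blast
  thus ?thesis using consec_edges[OF v] by simp
qed

lemma chain_edges_consec: assumes v: "v \<in> V" shows "chain_edges T v = consec (chain T v)"
proof -
  have "chain_edges T v = {(a,b) \<in> E. b \<in> chain T v}" by (rule chain_edges_eq)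
  also have "\<dots> = consec (chain T v)" by (rule consec_edges[OF v])
  finally show ?thesis .
qed

end

lemma consec_sub: "consec C \<subseteq> C \<times> C" unfolding consec_def by auto

lemma consec_in: assumes "finite C" "b \<in> C" "a \<in> C" "a < b"
  shows "(Max {c \<in> C. c < b}, b) \<in> consec C"
proof -
  let ?S = "{c \<in> C. c < b}"
  have fin: "finite ?S" using assms by auto
  have ne: "?S \<noteq> {}" using assms by auto
  have m1: "Max ?S \<in> ?S" by (rule Max_in[OF fin ne])
  have m2: "\<And>c. c \<in> ?S \<Longrightarrow> c \<le> Max ?S" by (rule Max_ge[OF fin])
  have nb: "\<not>(\<exists>c\<in>C. Max ?S < c \<and> c < b)"
  proof
    assume "\<exists>c\<in>C. Max ?S < c \<and> c < b"
    then obtain c where c: "c \<in> C" "Max ?S < c" "c < b" by blast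
    hence "c \<in> ?S" by simp
    hence "c \<le> Max ?S" by (rule m2)
    with c(2) show False by simp
  qed
  have "Max ?S \<in> C" "Max ?S < b" using m1 by simp_all
  with nb assms(2) show ?thesis unfolding consec_def by blast
qed

lemma consec_unique: assumes "(a,b) \<in> consec C" "(a',b) \<in> consec C" shows "a = a'"
proof (rule ccontr)
  assume "a \<noteq> a'"
  hence "a < a' \<or> a' < a" by auto
  moreover have "a \<in> C" "a' \<in> C" "a < b" "a' < b" "\<not>(\<exists>c\<in>C. a < c \<and> c < b)" "\<not>(\<exists>c\<in>C. a' < c \<and> c < b)"
    using assms unfolding consec_def by simp_all
  ultimately show False by (metis linorder_neqE_nat)
qed


context itree begin

definition "wclosed v W \<longleftrightarrow> W \<subseteq> V \<and> W \<noteq> {} \<and> (\<forall>x\<in>W. x \<notin> chain T v \<longrightarrow> par T x \<in> W)"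

lemma restr_Min:
  assumes v: "v \<in> V" and cl: "wclosed v W"
  shows "Min W \<in> W" "Min W \<in> chain T v"
proof -
  have W: "W \<subseteq> V" "W \<noteq> {}" "finite W" using cl finV finite_subset unfolding wclosed_def by auto
  show mW: "Min W \<in> W" using W by simp
  show "Min W \<in> chain T v"
  proof (rule ccontr)
    assume nC: "Min W \<notin> chain T v"
    have r: "Min W \<noteq> rt" using nC rt_chain[OF v] by auto
    have "par T (Min W) \<in> W" using cl nC mW unfolding wclosed_def by auto
    hence "Min W \<le> par T (Min W)" using W by simp
    moreover have "Min W \<in> V" using mW W(1) by blast
    moreover have "par T (Min W) < Min W" using par_less[OF \<open>Min W \<in> V\<close> r] .
    ultimately show False by simp
  qed
qed

lemma restr_edges: "edges (restr T v W) = {(a,b) \<in> E. b \<in> W - chain T v} \<union> consec (chain T v \<inter> W)"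
  unfolding restr_def by simp
lemma restr_verts: "verts (restr T v W) = W"
  unfolding restr_def by simp

lemma restr_inc:
  assumes v: "v \<in> V" and cl: "wclosed v W"
  shows "inc_tree (restr T v W)"
proof -
  have W: "W \<subseteq> V" "W \<noteq> {}" "finite W" using cl finV finite_subset unfolding wclosed_def by auto
  let ?C = "chain T v"
  let ?E' = "{(a,b) \<in> E. b \<in> W - ?C} \<union> consec (?C \<inter> W)"
  have e1: "?E' \<subseteq> W \<times> W"
  proof
    fix e assume "e \<in> ?E'"
    then consider "e \<in> {(a,b) \<in> E. b \<in> W - ?C}" | "e \<in> consec (?C \<inter> W)" by blast
    thus "e \<in> W \<times> W"
    proof cases
      case 1
      then obtain a b where e: "e = (a,b)" "(a,b) \<in> E" "b \<in> W" "b \<notin> ?C" by auto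
      have "a = par T b" using par_unique[OF e(2)] by simp
      hence "a \<in> W" using cl e unfolding wclosed_def by auto
      thus ?thesis using e by auto
    next
      case 2 thus ?thesis using consec_sub by blast
    qed
  qed
  have e2: "\<forall>(a,b)\<in>?E'. a < b" using Eless unfolding consec_def by auto
  have e3: "\<forall>y\<in>W. y \<noteq> Min W \<longrightarrow> (\<exists>!a. (a,y) \<in> ?E')"
  proof (intro ballI impI)
    fix y assume y: "y \<in> W" "y \<noteq> Min W"
    show "\<exists>!a. (a,y) \<in> ?E'"
    proof (cases "y \<in> ?C")
      case False
      have yr: "y \<noteq> rt" using False rt_chain[OF v] by auto
      have yV: "y \<in> V" using y W by auto
      have ex: "(par T y, y) \<in> ?E'" using par_edge[OF yV yr] y False by auto
      have un: "a = par T y" if "(a,y) \<in> ?E'" for a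
      proof -
        have "(a,y) \<in> E" using that False unfolding consec_def by auto
        thus ?thesis using par_unique by simp
      qed
      show ?thesis using ex un by blast
    next
      case True
      let ?p = "Max {c \<in> ?C \<inter> W. c < y}"
      have fC: "finite (?C \<inter> W)" using chain_fin by auto
      have mn: "Min W \<in> ?C \<inter> W" using restr_Min[OF v cl] by auto
      have "Min W < y" using y W by (metis Min_le le_neq_implies_less)
      hence ex: "(?p, y) \<in> consec (?C \<inter> W)" using consec_in[OF fC _ mn] True y by auto
      have un: "a = ?p" if "(a,y) \<in> ?E'" for a
      proof -
        have "(a,y) \<in> consec (?C \<inter> W)" using that True by auto
        thus ?thesis using consec_unique ex by blast
      qed
      show ?thesis using ex un by blast
    qed
  qed
  have "0 \<notin> W" using zero W by auto
  thus ?thesis unfolding inc_tree_def restr_def using W e1 e2 e3 by simp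
qed

lemma restr_anc:
  assumes v: "v \<in> V" and cl: "wclosed v W"
  shows "y \<in> W \<Longrightarrow> anc (restr T v W) y = anc T y \<inter> W"
proof (induction y rule: less_induct)
  case (less y)
  interpret R: itree "restr T v W" using restr_inc[OF v cl] by (unfold_locales)
  have W: "W \<subseteq> V" "W \<noteq> {}" "finite W" using cl finV finite_subset unfolding wclosed_def by auto
  let ?C = "chain T v"
  have Rrt: "R.rt = Min W" unfolding R.rt_def restr_verts ..
  have yV: "y \<in> V" using less W by auto
  show ?case
  proof (cases "y = Min W")
    case True
    have "anc T y \<inter> W = {y}"
    proof
      show "{y} \<subseteq> anc T y \<inter> W" using less unfolding anc_def by auto
      show "anc T y \<inter> W \<subseteq> {y}"
      proof
        fix x assume x: "x \<in> anc T y \<inter> W"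
        hence "x \<le> y" unfolding anc_def using rtr_le by auto
        moreover have "y \<le> x" using True x W by auto
        ultimately show "x \<in> {y}" by simp
      qed
    qed
    thus ?thesis using R.anc_rt Rrt True by simp
  next
    case False
    hence yr: "y \<noteq> R.rt" using Rrt by simp
    have yW: "y \<in> verts (restr T v W)" using less restr_verts by simp
    have rec: "anc (restr T v W) y = insert y (anc (restr T v W) (par (restr T v W) y))"
      by (rule R.anc_rec[OF yW yr])
    show ?thesis
    proof (cases "y \<in> ?C")
      case False
      have ytr: "y \<noteq> rt" using False rt_chain[OF v] by auto
      have pe: "(par T y, y) \<in> edges (restr T v W)"
        using par_edge[OF yV ytr] less False restr_edges by auto
      hence pp: "par (restr T v W) y = par T y" by (rule R.par_unique)
      have pW: "par T y \<in> W" using cl less False unfolding wclosed_def by auto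
      have IH: "anc (restr T v W) (par T y) = anc T (par T y) \<inter> W"
        using less.IH[OF par_less[OF yV ytr] pW] .
      show ?thesis using rec pp IH anc_rec[OF yV ytr] less by auto
    next
      case True
      let ?p = "Max {c \<in> ?C \<inter> W. c < y}"
      have fC: "finite (?C \<inter> W)" using chain_fin by auto
      have mn: "Min W \<in> ?C \<inter> W" using restr_Min[OF v cl] by auto
      have "Min W < y" using False less W by (metis Min_le le_neq_implies_less)
      hence ex: "(?p, y) \<in> consec (?C \<inter> W)" using consec_in[OF fC _ mn] True less by auto
      hence pp: "par (restr T v W) y = ?p" using R.par_unique restr_edges by auto
      have pC: "?p \<in> ?C \<inter> W" "?p < y" and nb: "\<not>(\<exists>c\<in>?C \<inter> W. ?p < c \<and> c < y)"
        using ex unfolding consec_def by auto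
      have IH: "anc (restr T v W) ?p = anc T ?p \<inter> W"
        using less.IH[OF pC(2)] pC(1) by auto
      have a1: "anc T y = ?C \<inter> {..y}" by (rule anc_chain[OF True])
      have a2: "anc T ?p = ?C \<inter> {..?p}" using anc_chain pC(1) by auto
      have "anc T y \<inter> W = insert y (anc T ?p \<inter> W)"
      proof (rule set_eqI)
        fix x
        show "x \<in> anc T y \<inter> W \<longleftrightarrow> x \<in> insert y (anc T ?p \<inter> W)"
        proof
          assume x: "x \<in> anc T y \<inter> W"
          hence "x \<in> ?C" "x \<le> y" "x \<in> W" using a1 by auto
          moreover have "\<not> (?p < x \<and> x < y)" using nb calculation by blast
          ultimately have "x = y \<or> x \<le> ?p" by linarith
          thus "x \<in> insert y (anc T ?p \<inter> W)" using a2 \<open>x \<in> ?C\<close> \<open>x \<in> W\<close> by auto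
        next
          assume "x \<in> insert y (anc T ?p \<inter> W)"
          thus "x \<in> anc T y \<inter> W" using a1 a2 pC less True by auto
        qed
      qed
      thus ?thesis using rec pp IH by simp
    qed
  qed
qed

end

lemma consec_iff: "(a,b) \<in> consec C \<longleftrightarrow> a \<in> C \<and> b \<in> C \<and> a < b \<and> \<not>(\<exists>c\<in>C. a < c \<and> c < b)"
  unfolding consec_def by simp

locale splt = S: itree T + S1: itree T1 + S2: itree T2 for T T1 T2 +
  fixes v t
  assumes disj: "verts T1 \<inter> verts T2 = {}" and vV1: "v \<in> verts T1" and tV2: "t \<in> verts T2"
    and tv: "t < v" and eq: "T = spl T1 v T2 t"
begin

abbreviation "C1 \<equiv> chain T1 v"
abbreviation "C2 \<equiv> chain T2 t"

lemma VT: "verts T = verts T1 \<union> verts T2" using eq spl_eq by simp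

lemma E1_nc: "edges T1 - chain_edges T1 v = {(a,b) \<in> edges T1. b \<notin> C1}"
  using S1.chain_edges_eq by auto
lemma E2_nc: "edges T2 - chain_edges T2 t = {(a,b) \<in> edges T2. b \<notin> C2}"
  using S2.chain_edges_eq by auto

lemma ET: "edges T = {(a,b) \<in> edges T1. b \<notin> C1} \<union> {(a,b) \<in> edges T2. b \<notin> C2} \<union> consec (C1 \<union> C2)"
proof -
  have "edges T = (edges T1 - chain_edges T1 v) \<union> (edges T2 - chain_edges T2 t) \<union> consec (C1 \<union> C2)"
    using eq spl_eq by simp
  thus ?thesis using E1_nc E2_nc by simp
qed

lemma C1V: "C1 \<subseteq> verts T1" by (rule S1.chain_sub)
lemma C2V: "C2 \<subseteq> verts T2" by (rule S2.chain_sub)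

lemma rt_C: "S.rt \<in> C1 \<union> C2"
proof -
  have "S.rt = Min (verts T1 \<union> verts T2)" unfolding S.rt_def VT ..
  also have "\<dots> = min (Min (verts T1)) (Min (verts T2))"
    using Min_Un[of "verts T1" "verts T2"] S1.finV S1.neV S2.finV S2.neV by simp
  also have "\<dots> = min S1.rt S2.rt" unfolding S1.rt_def S2.rt_def ..
  finally show ?thesis using S1.rt_chain[OF vV1] S2.rt_chain[OF tV2] by (simp add: min_def)
qed

lemma anc_C: "y \<in> C1 \<union> C2 \<Longrightarrow> anc T y = (C1 \<union> C2) \<inter> {..y}"
proof (induction y rule: less_induct)
  case (less y)
  let ?C = "C1 \<union> C2"
  have CV: "?C \<subseteq> verts T" using C1V C2V VT by auto
  have yV: "y \<in> verts T" using less CV by auto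
  show ?case
  proof (cases "y = S.rt")
    case True
    have "?C \<inter> {..y} = {y}"
    proof
      show "{y} \<subseteq> ?C \<inter> {..y}" using less by simp
      show "?C \<inter> {..y} \<subseteq> {y}"
      proof
        fix x assume x: "x \<in> ?C \<inter> {..y}"
        hence "x \<in> verts T" using CV by blast
        hence "y \<le> x" using S.rt_le[of x] True by simp
        thus "x \<in> {y}" using x by simp
      qed
    qed
    thus ?thesis using True S.anc_rt by simp
  next
    case False
    let ?p = "Max {c \<in> ?C. c < y}"
    have fC: "finite ?C" using S1.chain_fin S2.chain_fin by auto
    have "S.rt < y" using False S.rt_le[OF yV] by simp
    hence ex: "(?p, y) \<in> consec ?C" using consec_in[OF fC less.prems rt_C] by auto
    hence pe: "(?p, y) \<in> edges T" using ET by auto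
    hence pp: "par T y = ?p" by (rule S.par_unique)
    have pC: "?p \<in> ?C" "?p < y" and nb: "\<not>(\<exists>c\<in>?C. ?p < c \<and> c < y)"
      using ex[unfolded consec_iff] by blast+
    have IH: "anc T ?p = ?C \<inter> {..?p}" using less.IH[OF pC(2) pC(1)] .
    have "?C \<inter> {..y} = insert y (?C \<inter> {..?p})"
    proof (rule set_eqI)
      fix x show "x \<in> ?C \<inter> {..y} \<longleftrightarrow> x \<in> insert y (?C \<inter> {..?p})"
      proof
        assume x: "x \<in> ?C \<inter> {..y}"
        have "\<not> (?p < x \<and> x < y)" using nb x by blast
        thus "x \<in> insert y (?C \<inter> {..?p})" using x by auto
      next
        assume "x \<in> insert y (?C \<inter> {..?p})"
        thus "x \<in> ?C \<inter> {..y}" using pC less.prems by auto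
      qed
    qed
    thus ?thesis using S.anc_rec[OF yV False] pp IH by simp
  qed
qed

lemma chain_T: "chain T v = C1 \<union> C2"
proof -
  have vV: "v \<in> verts T" using VT vV1 by auto
  have vC: "v \<in> C1 \<union> C2" using S1.v_chain[OF vV1] by auto
  have "chain T v = (C1 \<union> C2) \<inter> {..v}" using S.chain_anc[OF vV] anc_C[OF vC] by simp
  moreover have "C1 \<union> C2 \<subseteq> {..v}" using S1.chain_le S2.chain_le tv by fastforce
  ultimately show ?thesis by auto
qed

lemma C1_eq: "C1 = chain T v \<inter> verts T1" using chain_T C1V C2V disj by auto
lemma C2_eq: "C2 = chain T v \<inter> verts T2" using chain_T C1V C2V disj by auto

lemma anch1: "x \<in> verts T1 \<Longrightarrow> x \<notin> C1 \<Longrightarrow> x \<notin> chain T v \<and> anch T v x = anch T1 v x"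
proof (induction x rule: less_induct)
  case (less x)
  have vV: "v \<in> verts T" using VT vV1 by auto
  have xV: "x \<in> verts T" using VT less by auto
  have xC: "x \<notin> chain T v" using C1_eq less by auto
  have xr: "x \<noteq> S1.rt" using S1.rt_chain[OF vV1] less by auto
  have e: "(par T1 x, x) \<in> edges T" using S1.par_edge[OF less.prems(1) xr] less.prems ET by auto
  hence pp: "par T x = par T1 x" by (rule S.par_unique)
  have pV: "par T1 x \<in> verts T1" using S1.par_in[OF less.prems(1) xr] .
  have pl: "par T1 x < x" using S1.par_less[OF less.prems(1) xr] .
  have a1: "anch T v x = (if par T1 x \<in> chain T v then par T1 x else anch T v (par T1 x))"
    using S.anch_par[OF vV xV xC] pp by simp
  have a2: "anch T1 v x = (if par T1 x \<in> C1 then par T1 x else anch T1 v (par T1 x))"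
    using S1.anch_par[OF vV1 less.prems] .
  have "par T1 x \<in> chain T v \<longleftrightarrow> par T1 x \<in> C1" using C1_eq pV by auto
  thus ?case using a1 a2 less.IH[OF pl pV] xC by auto
qed

lemma anch2: "x \<in> verts T2 \<Longrightarrow> x \<notin> C2 \<Longrightarrow> x \<notin> chain T v \<and> anch T v x = anch T2 t x"
proof (induction x rule: less_induct)
  case (less x)
  have vV: "v \<in> verts T" using VT vV1 by auto
  have xV: "x \<in> verts T" using VT less by auto
  have xC: "x \<notin> chain T v" using C2_eq less by auto
  have xr: "x \<noteq> S2.rt" using S2.rt_chain[OF tV2] less by auto
  have e: "(par T2 x, x) \<in> edges T" using S2.par_edge[OF less.prems(1) xr] less.prems ET by auto
  hence pp: "par T x = par T2 x" by (rule S.par_unique)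
  have pV: "par T2 x \<in> verts T2" using S2.par_in[OF less.prems(1) xr] .
  have pl: "par T2 x < x" using S2.par_less[OF less.prems(1) xr] .
  have a1: "anch T v x = (if par T2 x \<in> chain T v then par T2 x else anch T v (par T2 x))"
    using S.anch_par[OF vV xV xC] pp by simp
  have a2: "anch T2 t x = (if par T2 x \<in> C2 then par T2 x else anch T2 t (par T2 x))"
    using S2.anch_par[OF tV2 less.prems] .
  have "par T2 x \<in> chain T v \<longleftrightarrow> par T2 x \<in> C2" using C2_eq pV by auto
  thus ?case using a1 a2 less.IH[OF pl pV] xC by auto
qed

lemma T1_restr: "T1 = restr T v (verts T1)"
proof -
  have "{(a,b) \<in> edges T1. b \<notin> C1} = {(a,b) \<in> edges T. b \<in> verts T1 - chain T v}"
  proof (rule set_eqI, rule iffI)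
    fix e assume "e \<in> {(a,b) \<in> edges T1. b \<notin> C1}"
    then obtain a b where e: "e = (a,b)" "(a,b) \<in> edges T1" "b \<notin> C1" by auto
    have "b \<in> verts T1" using S1.edge_in[OF e(2)] by auto
    thus "e \<in> {(a,b) \<in> edges T. b \<in> verts T1 - chain T v}" using e ET C1_eq by auto
  next
    fix e assume "e \<in> {(a,b) \<in> edges T. b \<in> verts T1 - chain T v}"
    then obtain a b where e: "e = (a,b)" "(a,b) \<in> edges T" "b \<in> verts T1" "b \<notin> chain T v" by auto
    have "(a,b) \<notin> consec (C1 \<union> C2)" using e(4) chain_T consec_sub by blast
    moreover have "(a,b) \<notin> edges T2" using S2.edge_in e(3) disj by blast
    ultimately show "e \<in> {(a,b) \<in> edges T1. b \<notin> C1}" using e ET C1_eq by auto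
  qed
  hence "edges T1 = edges (restr T v (verts T1))"
    using S1.E_split[OF vV1] C1_eq unfolding S.restr_edges by (simp add: Int_commute)
  thus ?thesis using S.restr_verts by (metis prod.collapse)
qed

lemma T2_restr: "T2 = restr T v (verts T2)"
proof -
  have "{(a,b) \<in> edges T2. b \<notin> C2} = {(a,b) \<in> edges T. b \<in> verts T2 - chain T v}"
  proof (rule set_eqI, rule iffI)
    fix e assume "e \<in> {(a,b) \<in> edges T2. b \<notin> C2}"
    then obtain a b where e: "e = (a,b)" "(a,b) \<in> edges T2" "b \<notin> C2" by auto
    have "b \<in> verts T2" using S2.edge_in[OF e(2)] by auto
    thus "e \<in> {(a,b) \<in> edges T. b \<in> verts T2 - chain T v}" using e ET C2_eq by auto
  next
    fix e assume "e \<in> {(a,b) \<in> edges T. b \<in> verts T2 - chain T v}"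
    then obtain a b where e: "e = (a,b)" "(a,b) \<in> edges T" "b \<in> verts T2" "b \<notin> chain T v" by auto
    have "(a,b) \<notin> consec (C1 \<union> C2)" using e(4) chain_T consec_sub by blast
    moreover have "(a,b) \<notin> edges T1" using S1.edge_in e(3) disj by blast
    ultimately show "e \<in> {(a,b) \<in> edges T2. b \<notin> C2}" using e ET C2_eq by auto
  qed
  hence "edges T2 = edges (restr T v (verts T2))"
    using S2.E_split[OF tV2] C2_eq unfolding S.restr_edges by (simp add: Int_commute)
  thus ?thesis using S.restr_verts by (metis prod.collapse)
qed

lemma t_eq: "t = Max (chain T v \<inter> verts T2)"
proof -
  have "t \<in> C2" using S2.v_chain[OF tV2] .
  moreover have "\<And>x. x \<in> C2 \<Longrightarrow> x \<le> t" using S2.chain_le by auto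
  moreover have "finite C2" using S2.chain_fin .
  ultimately have "t = Max C2" by (metis Max_eqI)
  thus ?thesis using C2_eq by simp
qed

end

abbreviation sy :: "('a \<times> 'a) set \<Rightarrow> ('a \<times> 'a) set" where "sy R \<equiv> R \<union> R\<inverse>"

lemma sy_closed:
  assumes "(x,y) \<in> (sy R)\<^sup>*" "\<And>a b. (a,b) \<in> R \<Longrightarrow> a \<in> X \<longleftrightarrow> b \<in> X"
  shows "x \<in> X \<longleftrightarrow> y \<in> X"
  using assms(1) by (induction rule: rtrancl_induct) (use assms(2) in blast)+

lemma sy_restrict:
  assumes "(x,y) \<in> (sy R)\<^sup>*" "x \<in> X"
    "\<And>a b. (a,b) \<in> R \<Longrightarrow> a \<in> X \<or> b \<in> X \<Longrightarrow> (a,b) \<in> R' \<and> a \<in> X \<and> b \<in> X"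
  shows "(x,y) \<in> (sy R')\<^sup>* \<and> y \<in> X"
  using assms(1)
proof (induction rule: rtrancl_induct)
  case base thus ?case using assms(2) by simp
next
  case (step y z)
  from step.hyps(2) consider "(y,z) \<in> R" | "(z,y) \<in> R" by blast
  thus ?case
  proof cases
    case 1
    hence "(y,z) \<in> R'" "z \<in> X" using assms(3) step.IH by blast+
    thus ?thesis using step.IH by (meson UnI1 rtrancl.rtrancl_into_rtrancl)
  next
    case 2
    hence "(z,y) \<in> R'" "z \<in> X" using assms(3) step.IH by blast+
    thus ?thesis using step.IH by (meson UnI2 converseI rtrancl.rtrancl_into_rtrancl)
  qed
qed

lemma sy_map:
  assumes "(x,y) \<in> (sy R)\<^sup>*" "\<And>a b. (a,b) \<in> R \<Longrightarrow> f a = f b \<or> (f a, f b) \<in> R'"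
  shows "(f x, f y) \<in> (sy R')\<^sup>*"
  using assms(1)
proof (induction rule: rtrancl_induct)
  case (step y z)
  from step.hyps(2) consider "(y,z) \<in> R" | "(z,y) \<in> R" by blast
  thus ?case
  proof cases
    case 1
    hence "f y = f z \<or> (f y, f z) \<in> sy R'" using assms(2) by blast
    thus ?thesis using step.IH by (metis rtrancl.rtrancl_into_rtrancl)
  next
    case 2
    hence "f z = f y \<or> (f z, f y) \<in> R'" using assms(2) by blast
    hence "f y = f z \<or> (f y, f z) \<in> sy R'" by auto
    thus ?thesis using step.IH by (metis rtrancl.rtrancl_into_rtrancl)
  qed
qed simp

lemma sy_sym: "(x,y) \<in> (sy R)\<^sup>* \<Longrightarrow> (y,x) \<in> (sy R)\<^sup>*"
proof -
  assume "(x,y) \<in> (sy R)\<^sup>*"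
  hence "(y,x) \<in> ((sy R)\<^sup>*)\<inverse>" by simp
  also have "((sy R)\<^sup>*)\<inverse> = ((sy R)\<inverse>)\<^sup>*" by (rule rtrancl_converse[symmetric])
  also have "(sy R)\<inverse> = sy R" by auto
  finally show ?thesis .
qed

lemma sink_closed:
  assumes sv: "\<And>a b c. (a,b) \<in> R \<Longrightarrow> (a,c) \<in> R \<Longrightarrow> b = c" and zs: "\<And>b. (z,b) \<notin> R"
    and ab: "(a,b) \<in> R"
  shows "(a,z) \<in> R\<^sup>* \<longleftrightarrow> (b,z) \<in> R\<^sup>*"
proof
  assume "(a,z) \<in> R\<^sup>*"
  thus "(b,z) \<in> R\<^sup>*"
  proof (cases rule: converse_rtranclE)
    case base thus ?thesis using zs ab by auto
  next
    case (step c) thus ?thesis using sv[OF ab step(1)] by simp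
  qed
next
  assume "(b,z) \<in> R\<^sup>*" thus "(a,z) \<in> R\<^sup>*" using ab by (meson converse_rtrancl_into_rtrancl)
qed

lemma loop_sink:
  assumes sv: "\<And>a b c. (a,b) \<in> R \<Longrightarrow> (a,c) \<in> R \<Longrightarrow> b = c"
  shows "(x,z) \<in> R\<^sup>* \<Longrightarrow> (x,x) \<in> R \<Longrightarrow> x = z"
proof (induction rule: converse_rtrancl_induct)
  case (step y w)
  have "w = y" using sv[OF step(1) step(4)] .
  thus ?case using step by simp
qed simp

definition ublk :: "nat set set \<Rightarrow> nat set \<Rightarrow> bool" where
  "ublk P W \<longleftrightarrow> W = \<Union>(blocks_in P W)"

locale part = fixes r :: nat and P :: "nat set set" assumes std: "std_partition r P"
begin

lemma PU: "\<Union>P = {1..r}" and Pd: "disjoint P" and Pne: "{} \<notin> P" and r2: "r \<ge> 2" and one: "{1} \<in> P"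
  using std unfolding std_partition_def partition_on_def by auto

lemma blk_eq: assumes "B \<in> P" "x \<in> B" shows "blk P x = B"
proof -
  have u: "B' = B" if "B' \<in> P" "x \<in> B'" for B'
    using Pd that assms unfolding disjoint_def by blast
  show ?thesis unfolding blk_def using assms u by (metis (mono_tags, lifting) the_equality)
qed

lemma blk_in: assumes "x \<in> {1..r}" shows "blk P x \<in> P" "x \<in> blk P x"
proof -
  obtain B where "B \<in> P" "x \<in> B" using PU assms by blast
  thus "blk P x \<in> P" "x \<in> blk P x" using blk_eq by auto
qed

lemma P_sub: "B \<in> P \<Longrightarrow> B \<subseteq> {1..r}" using PU by auto
lemma P_fin: "B \<in> P \<Longrightarrow> finite B" using P_sub finite_subset by blast
lemma P_ne: "B \<in> P \<Longrightarrow> B \<noteq> {}" using Pne by auto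

lemma blk1: "blk P 1 = {1}" using blk_eq[OF one] by simp

lemma ublk_sub: "ublk P W \<Longrightarrow> W \<subseteq> {1..r}"
  unfolding ublk_def blocks_in_def using P_sub by blast

lemma ublk_blk: assumes "ublk P W" "x \<in> W" shows "blk P x \<in> blocks_in P W"
proof -
  obtain B where B: "B \<in> P" "B \<subseteq> W" "x \<in> B" using assms unfolding ublk_def blocks_in_def by blast
  thus ?thesis using blk_eq[OF B(1,3)] unfolding blocks_in_def by simp
qed

lemma bin_blk: "B \<in> blocks_in P W \<Longrightarrow> x \<in> B \<Longrightarrow> blk P x = B"
  unfolding blocks_in_def using blk_eq by auto

lemma bin_Max: assumes "B \<in> blocks_in P W" shows "Max B \<in> B" "Max B \<in> W" "\<And>x. x \<in> B \<Longrightarrow> x \<le> Max B"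
  using assms P_fin P_ne unfolding blocks_in_def by auto

lemma bin_sub: "B \<in> blocks_in P W \<Longrightarrow> B \<subseteq> W" unfolding blocks_in_def by auto

lemma ublk_split: assumes "ublk P W" "B \<in> blocks_in P W" "W = W1 \<union> W2" "ublk P W1" "W1 \<inter> W2 = {}"
  shows "B \<subseteq> W1 \<or> B \<subseteq> W2"
proof (cases "B \<inter> W1 = {}")
  case True thus ?thesis using assms bin_sub by blast
next
  case False
  then obtain x where x: "x \<in> B" "x \<in> W1" by auto
  have "blk P x = B" using bin_blk[OF assms(2) x(1)] .
  moreover have "blk P x \<in> blocks_in P W1" using ublk_blk[OF assms(4) x(2)] .
  ultimately show ?thesis using bin_sub by auto
qed

end


locale pitree = itree T + part r P for T r P + assumes pit: "pi_inc_tree P T"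
begin

lemma ublkV: "ublk P V" using pit unfolding pi_inc_tree_def ublk_def by auto
lemma Vsub: "V \<subseteq> {1..r}" using ublk_sub[OF ublkV] .

lemma pi_anc: assumes "B \<in> blocks_in P V" "i \<in> B" "j \<in> B" "i \<le> j" shows "(i,j) \<in> E\<^sup>*"
proof (cases "i = j")
  case False
  hence "(i,j) \<in> E\<^sup>+" using pit assms unfolding pi_inc_tree_def by auto
  thus ?thesis by simp
qed simp

lemma blkV: "x \<in> V \<Longrightarrow> blk P x \<in> blocks_in P V" using ublk_blk[OF ublkV] .

lemma dep_iff: assumes v: "v \<in> V"
  shows "(B,X) \<in> dep_edges P T v \<longleftrightarrow>
    B \<in> blocks_in P V \<and> Max B \<notin> chain T v \<and> X = blk P (anch T v (Max B))"
proof
  assume "(B,X) \<in> dep_edges P T v"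
  then obtain a where a: "X = blk P a" "B \<in> blocks_in P V" "Max B \<notin> chain T v"
    "a \<in> chain T v" "Max B \<in> comp_verts T v a" unfolding dep_edges_def by blast
  have "anch T v (Max B) = a" using comp_char[OF v a(4) a(3)] a(5) by simp
  thus "B \<in> blocks_in P V \<and> Max B \<notin> chain T v \<and> X = blk P (anch T v (Max B))" using a by simp
next
  assume h: "B \<in> blocks_in P V \<and> Max B \<notin> chain T v \<and> X = blk P (anch T v (Max B))"
  let ?a = "anch T v (Max B)"
  have mV: "Max B \<in> V" using bin_Max h by blast
  have aC: "?a \<in> chain T v" using anch_props(1)[OF v mV] .
  have "Max B \<in> comp_verts T v ?a" using comp_char[OF v aC] h mV by simp
  thus "(B,X) \<in> dep_edges P T v" unfolding dep_edges_def using h aC by blast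
qed

lemma dep_sv: "v \<in> V \<Longrightarrow> (a,b) \<in> dep_edges P T v \<Longrightarrow> (a,c) \<in> dep_edges P T v \<Longrightarrow> b = c"
  using dep_iff by simp

lemma dep_tgt: assumes v: "v \<in> V" "(B,X) \<in> dep_edges P T v" shows "X \<in> blocks_in P V" "B \<in> blocks_in P V"
proof -
  have h: "B \<in> blocks_in P V" "X = blk P (anch T v (Max B))" using dep_iff v by auto
  have "Max B \<in> V" using bin_Max h by blast
  hence "anch T v (Max B) \<in> V" using anch_props(1)[OF v(1)] chain_sub by blast
  thus "X \<in> blocks_in P V" "B \<in> blocks_in P V" using blkV h by auto
qed

lemma dep_blk: assumes v: "v \<in> V" and x: "x \<in> V" "x \<notin> chain T v"
  shows "(blk P x, blk P (anch T v x)) \<in> dep_edges P T v"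
proof -
  let ?B = "blk P x"
  have B: "?B \<in> blocks_in P V" using blkV x by simp
  have xB: "x \<in> ?B" using blk_in Vsub x by blast
  have m: "Max ?B \<in> ?B" "Max ?B \<in> V" "x \<le> Max ?B" using bin_Max[OF B] xB by auto
  have p: "(x, Max ?B) \<in> E\<^sup>*" using pi_anc[OF B xB m(1) m(3)] .
  have "Max ?B \<notin> chain T v" "anch T v (Max ?B) = anch T v x"
    using anch_desc[OF v p m(2) x(2)] by auto
  thus ?thesis using dep_iff[OF v] B by simp
qed

definition Kc :: "nat \<Rightarrow> nat set set" where
  "Kc v = {B \<in> blocks_in P V. (blk P v, B) \<in> (sy (dep_edges P T v))\<^sup>*}"
definition W1 :: "nat \<Rightarrow> nat set" where "W1 v = \<Union>(Kc v)"

lemma Kc_sub: "Kc v \<subseteq> blocks_in P V" unfolding Kc_def by auto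

lemma Kc_closed: assumes v: "v \<in> V" "(a,b) \<in> dep_edges P T v" shows "a \<in> Kc v \<longleftrightarrow> b \<in> Kc v"
proof -
  have ab: "a \<in> blocks_in P V" "b \<in> blocks_in P V" using dep_tgt[OF v] by auto
  have "(blk P v, a) \<in> (sy (dep_edges P T v))\<^sup>* \<longleftrightarrow> (blk P v, b) \<in> (sy (dep_edges P T v))\<^sup>*"
  proof
    assume "(blk P v, a) \<in> (sy (dep_edges P T v))\<^sup>*"
    thus "(blk P v, b) \<in> (sy (dep_edges P T v))\<^sup>*" using v(2) by (meson UnI1 rtrancl.rtrancl_into_rtrancl)
  next
    assume "(blk P v, b) \<in> (sy (dep_edges P T v))\<^sup>*"
    thus "(blk P v, a) \<in> (sy (dep_edges P T v))\<^sup>*" using v(2)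
      by (meson UnI2 converseI rtrancl.rtrancl_into_rtrancl)
  qed
  thus ?thesis unfolding Kc_def using ab by blast
qed

lemma vK: "v \<in> V \<Longrightarrow> blk P v \<in> Kc v" unfolding Kc_def using blkV by auto

lemma W1_iff: assumes "x \<in> V" shows "x \<in> W1 v \<longleftrightarrow> blk P x \<in> Kc v"
proof
  assume "x \<in> W1 v"
  then obtain B where "B \<in> Kc v" "x \<in> B" unfolding W1_def by auto
  thus "blk P x \<in> Kc v" using bin_blk Kc_sub by blast
next
  assume "blk P x \<in> Kc v"
  moreover have "x \<in> blk P x" using blk_in Vsub assms by blast
  ultimately show "x \<in> W1 v" unfolding W1_def by auto
qed

lemma W1_sub: "W1 v \<subseteq> V" unfolding W1_def using Kc_sub bin_sub by blast
lemma vW1: "v \<in> V \<Longrightarrow> v \<in> W1 v" using W1_iff vK by simp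

lemma W1_anch: assumes v: "v \<in> V" and x: "x \<in> V" "x \<notin> chain T v"
  shows "x \<in> W1 v \<longleftrightarrow> anch T v x \<in> W1 v"
proof -
  have aV: "anch T v x \<in> V" using anch_props(1)[OF v x(1)] chain_sub by blast
  show ?thesis using Kc_closed[OF v dep_blk[OF v x]] W1_iff[OF x(1)] W1_iff[OF aV] by simp
qed

lemma W1_par: assumes v: "v \<in> V" and x: "x \<in> V" "x \<notin> chain T v"
  shows "x \<in> W1 v \<longleftrightarrow> par T x \<in> W1 v"
proof -
  have xr: "x \<noteq> rt" using x rt_chain[OF v] by auto
  have pV: "par T x \<in> V" using par_in[OF x(1) xr] .
  show ?thesis
  proof (cases "par T x \<in> chain T v")
    case True thus ?thesis using W1_anch[OF v x] anch_par[OF v x] by simp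
  next
    case False thus ?thesis using W1_anch[OF v x] W1_anch[OF v pV False] anch_par[OF v x] by simp
  qed
qed

lemma wcl1: "v \<in> V \<Longrightarrow> wclosed v (W1 v)"
  unfolding wclosed_def using W1_sub vW1 W1_par by blast

lemma wcl2: assumes v: "v \<in> V" and ne: "V - W1 v \<noteq> {}" shows "wclosed v (V - W1 v)"
proof -
  have "\<forall>x\<in>V - W1 v. x \<notin> chain T v \<longrightarrow> par T x \<in> V - W1 v"
  proof (intro ballI impI)
    fix x assume x: "x \<in> V - W1 v" "x \<notin> chain T v"
    have xr: "x \<noteq> rt" using x rt_chain[OF v] by auto
    show "par T x \<in> V - W1 v" using W1_par[OF v _ x(2)] x par_in[OF _ xr] by blast
  qed
  thus ?thesis unfolding wclosed_def using ne by blast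
qed

lemma ublk1: "ublk P (W1 v)"
proof -
  have "\<Union>(blocks_in P (W1 v)) \<subseteq> W1 v" unfolding blocks_in_def by auto
  moreover have "Kc v \<subseteq> blocks_in P (W1 v)" unfolding W1_def blocks_in_def using Kc_sub
    unfolding blocks_in_def by auto
  ultimately show ?thesis unfolding ublk_def W1_def by auto
qed

lemma ublk2: "ublk P (V - W1 v)"
proof -
  have "V - W1 v \<subseteq> \<Union>(blocks_in P (V - W1 v))"
  proof
    fix x assume x: "x \<in> V - W1 v"
    have B: "blk P x \<in> blocks_in P V" using blkV x by auto
    have xB: "x \<in> blk P x" using blk_in Vsub x by blast
    have "blk P x \<inter> W1 v = {}"
    proof (rule ccontr)
      assume "blk P x \<inter> W1 v \<noteq> {}"
      then obtain y where y: "y \<in> blk P x" "y \<in> W1 v" by auto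
      have "blk P y = blk P x" using bin_blk[OF B y(1)] .
      moreover have "y \<in> V" using y(2) W1_sub by blast
      ultimately have "blk P x \<in> Kc v" using W1_iff[of y v] y(2) by simp
      thus False using W1_iff x by auto
    qed
    hence "blk P x \<in> blocks_in P (V - W1 v)" using B unfolding blocks_in_def by auto
    thus "x \<in> \<Union>(blocks_in P (V - W1 v))" using xB by auto
  qed
  thus ?thesis unfolding ublk_def blocks_in_def by auto
qed

lemma blocks_W1: "blocks_in P (W1 v) = Kc v"
proof
  show "Kc v \<subseteq> blocks_in P (W1 v)" unfolding W1_def blocks_in_def using Kc_sub
    unfolding blocks_in_def by auto
  show "blocks_in P (W1 v) \<subseteq> Kc v"
  proof
    fix B assume B: "B \<in> blocks_in P (W1 v)"
    obtain x where x: "x \<in> B" using P_ne B unfolding blocks_in_def by blast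
    have "x \<in> W1 v" using B x bin_sub by blast
    hence "blk P x \<in> Kc v" using W1_iff W1_sub by blast
    thus "B \<in> Kc v" using bin_blk[OF B x] by simp
  qed
qed

end

context part begin
lemma blocks_disj: "A \<inter> B = {} \<Longrightarrow> blocks_in P A \<inter> blocks_in P B = {}"
  unfolding blocks_in_def using P_ne by blast
end

context pitree begin

lemma dep_spl:
  assumes p1: "pi_inc_tree P T1" and p2: "pi_inc_tree P T2"
    and disj: "verts T1 \<inter> verts T2 = {}" and vV1: "v \<in> verts T1" and tV2: "t \<in> verts T2"
    and tv: "t < v" and eq: "T = spl T1 v T2 t"
  shows "dep_edges P T v = dep_edges P T1 v \<union> dep_edges P T2 t"
proof -
  interpret Q1: pitree T1 r P using p1 std unfolding pi_inc_tree_def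
    by unfold_locales (auto simp: pi_inc_tree_def)
  interpret Q2: pitree T2 r P using p2 std unfolding pi_inc_tree_def
    by unfold_locales (auto simp: pi_inc_tree_def)
  interpret S: splt T T1 T2 v t using disj vV1 tV2 tv eq by unfold_locales
  have vV: "v \<in> V" using S.VT vV1 by auto
  show ?thesis
  proof (rule set_eqI)
    fix e
    obtain B X :: "nat set" where e: "e = (B,X)" by fastforce
    have "(B,X) \<in> dep_edges P T v \<longleftrightarrow> (B,X) \<in> dep_edges P T1 v \<or> (B,X) \<in> dep_edges P T2 t"
    proof (cases "B \<in> blocks_in P V")
      case False
      thus ?thesis using dep_iff[OF vV] Q1.dep_iff[OF vV1] Q2.dep_iff[OF tV2] S.VT
        unfolding blocks_in_def by auto
    next
      case True
      have "B \<subseteq> verts T1 \<or> B \<subseteq> verts T2"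
        using ublk_split[OF ublkV True S.VT Q1.ublkV disj] .
      thus ?thesis
      proof
        assume B1: "B \<subseteq> verts T1"
        have bb: "B \<in> blocks_in P (verts T1)" "B \<notin> blocks_in P (verts T2)"
          using True B1 blocks_disj[OF disj] unfolding blocks_in_def by auto
        have m1: "Max B \<in> verts T1" using bin_Max(2)[OF bb(1)] .
        have "Max B \<notin> chain T v \<longleftrightarrow> Max B \<notin> S.C1" using S.C1_eq m1 by auto
        moreover have "Max B \<notin> S.C1 \<Longrightarrow> anch T v (Max B) = anch T1 v (Max B)"
          using S.anch1 m1 by blast
        ultimately show ?thesis using dep_iff[OF vV] Q1.dep_iff[OF vV1] Q2.dep_iff[OF tV2] True bb
          by auto
      next
        assume B2: "B \<subseteq> verts T2"
        have bb: "B \<in> blocks_in P (verts T2)" "B \<notin> blocks_in P (verts T1)"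
          using True B2 blocks_disj[OF disj] unfolding blocks_in_def by auto
        have m2: "Max B \<in> verts T2" using bin_Max(2)[OF bb(1)] .
        have "Max B \<notin> chain T v \<longleftrightarrow> Max B \<notin> S.C2" using S.C2_eq m2 by auto
        moreover have "Max B \<notin> S.C2 \<Longrightarrow> anch T v (Max B) = anch T2 t (Max B)"
          using S.anch2 m2 by blast
        ultimately show ?thesis using dep_iff[OF vV] Q1.dep_iff[OF vV1] Q2.dep_iff[OF tV2] True bb
          by auto
      qed
    qed
    thus "e \<in> dep_edges P T v \<longleftrightarrow> e \<in> dep_edges P T1 v \<union> dep_edges P T2 t" using e by simp
  qed
qed

lemma G_uniq:
  assumes p1: "pi_inc_tree P T1" and p2: "pi_inc_tree P T2"
    and disj: "verts T1 \<inter> verts T2 = {}" and vV1: "v \<in> verts T1" and tV2: "t \<in> verts T2"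
    and tv: "t < v" and eq: "T = spl T1 v T2 t" and con: "dep_connected P T1 v"
  shows "verts T1 = W1 v" "T1 = restr T v (W1 v)" "T2 = restr T v (V - W1 v)"
    "t = Max (chain T v \<inter> (V - W1 v))"
proof -
  interpret Q1: pitree T1 r P using p1 std unfolding pi_inc_tree_def
    by unfold_locales (auto simp: pi_inc_tree_def)
  interpret Q2: pitree T2 r P using p2 std unfolding pi_inc_tree_def
    by unfold_locales (auto simp: pi_inc_tree_def)
  interpret S: splt T T1 T2 v t using disj vV1 tV2 tv eq by unfold_locales
  have vV: "v \<in> V" using S.VT vV1 by auto
  have R: "dep_edges P T v = dep_edges P T1 v \<union> dep_edges P T2 t"
    using dep_spl[OF p1 p2 disj vV1 tV2 tv eq] .
  have bv: "blk P v \<in> blocks_in P (verts T1)" using Q1.blkV[OF vV1] .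
  have "blocks_in P (verts T1) = Kc v"
  proof
    show "blocks_in P (verts T1) \<subseteq> Kc v"
    proof
      fix B assume B: "B \<in> blocks_in P (verts T1)"
      have "(blk P v, B) \<in> (sy (dep_edges P T1 v))\<^sup>*" using con B bv unfolding dep_connected_def by blast
      moreover have "sy (dep_edges P T1 v) \<subseteq> sy (dep_edges P T v)" using R by auto
      ultimately have "(blk P v, B) \<in> (sy (dep_edges P T v))\<^sup>*" using rtrancl_mono by blast
      moreover have "B \<in> blocks_in P V" using B S.VT unfolding blocks_in_def by auto
      ultimately show "B \<in> Kc v" unfolding Kc_def by simp
    qed
  next
    show "Kc v \<subseteq> blocks_in P (verts T1)"
    proof
      fix B assume "B \<in> Kc v"
      hence path: "(blk P v, B) \<in> (sy (dep_edges P T v))\<^sup>*" unfolding Kc_def by simp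
      have cl: "a \<in> blocks_in P (verts T1) \<longleftrightarrow> b \<in> blocks_in P (verts T1)"
        if ab: "(a,b) \<in> dep_edges P T v" for a b
      proof -
        from ab R consider "(a,b) \<in> dep_edges P T1 v" | "(a,b) \<in> dep_edges P T2 t" by blast
        thus ?thesis
        proof cases
          case 1 thus ?thesis using Q1.dep_tgt[OF vV1] by blast
        next
          case 2 thus ?thesis using Q2.dep_tgt[OF tV2] blocks_disj[OF disj] by blast
        qed
      qed
      show "B \<in> blocks_in P (verts T1)" using sy_closed[OF path cl] bv by blast
    qed
  qed
  hence V1: "verts T1 = W1 v" using Q1.ublkV unfolding ublk_def W1_def by simp
  have V2: "verts T2 = V - W1 v" using V1 S.VT disj by auto
  show "verts T1 = W1 v" by (rule V1)
  show "T1 = restr T v (W1 v)" using S.T1_restr V1 by simp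
  show "T2 = restr T v (V - W1 v)" using S.T2_restr V2 by simp
  show "t = Max (chain T v \<inter> (V - W1 v))" using S.t_eq V2 by simp
qed

lemma G_ex:
  assumes vV: "v \<in> V" and ne: "W1 v \<noteq> V"
  defines "T1 \<equiv> restr T v (W1 v)" and "T2 \<equiv> restr T v (V - W1 v)"
    and "t \<equiv> Max (chain T v \<inter> (V - W1 v))"
  shows "pi_inc_tree P T1 \<and> pi_inc_tree P T2 \<and> verts T1 \<inter> verts T2 = {} \<and> v \<in> verts T1
    \<and> t \<in> verts T2 \<and> t < v \<and> T = spl T1 v T2 t \<and> dep_connected P T1 v
    \<and> verts T1 = W1 v \<and> verts T2 = V - W1 v"
proof -
  let ?W1 = "W1 v" let ?W2 = "V - W1 v" let ?C = "chain T v"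
  have ne2: "?W2 \<noteq> {}" using ne W1_sub by auto
  have cl1: "wclosed v ?W1" using wcl1[OF vV] .
  have cl2: "wclosed v ?W2" using wcl2[OF vV ne2] .
  have inc1: "inc_tree T1" unfolding T1_def using restr_inc[OF vV cl1] .
  have inc2: "inc_tree T2" unfolding T2_def using restr_inc[OF vV cl2] .
  interpret R1: itree T1 using inc1 by unfold_locales
  interpret R2: itree T2 using inc2 by unfold_locales
  have VT1: "verts T1 = ?W1" unfolding T1_def restr_verts ..
  have VT2: "verts T2 = ?W2" unfolding T2_def restr_verts ..
  have m2: "Min ?W2 \<in> ?C \<inter> ?W2" using restr_Min[OF vV cl2] by auto
  have fin: "finite (?C \<inter> ?W2)" using chain_fin by auto
  have tin: "t \<in> ?C \<inter> ?W2" unfolding t_def using Max_in[OF fin] m2 by blast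
  have tmax: "\<And>x. x \<in> ?C \<inter> ?W2 \<Longrightarrow> x \<le> t" unfolding t_def using Max_ge[OF fin] by blast
  have v1: "v \<in> ?W1" using vW1[OF vV] .
  have tv: "t < v" using tin chain_le v1 by (metis DiffD2 IntD1 IntD2 le_neq_implies_less)
  have ch1: "chain T1 v = ?C \<inter> ?W1"
  proof -
    have "chain T1 v = anc T1 v" using R1.chain_anc v1 VT1 by simp
    also have "\<dots> = anc T v \<inter> ?W1" unfolding T1_def using restr_anc[OF vV cl1 v1] .
    finally show ?thesis using chain_anc[OF vV] by simp
  qed
  have ch2: "chain T2 t = ?C \<inter> ?W2"
  proof -
    have "chain T2 t = anc T2 t" using R2.chain_anc tin VT2 by simp
    also have "\<dots> = anc T t \<inter> ?W2" unfolding T2_def using restr_anc[OF vV cl2] tin by blast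
    also have "\<dots> = ?C \<inter> {..t} \<inter> ?W2" using anc_chain[of t v] tin by simp
    finally show ?thesis using tmax tin by auto
  qed
  have ne1: "edges T1 - chain_edges T1 v = {(a,b) \<in> E. b \<in> ?W1 - ?C}"
    unfolding R1.chain_edges_eq ch1 unfolding T1_def restr_edges using consec_sub by blast
  have ne2': "edges T2 - chain_edges T2 t = {(a,b) \<in> E. b \<in> ?W2 - ?C}"
    unfolding R2.chain_edges_eq ch2 unfolding T2_def restr_edges using consec_sub by blast
  have CC: "chain T1 v \<union> chain T2 t = ?C" using ch1 ch2 chain_sub W1_sub by blast
  have "edges (spl T1 v T2 t) = {(a,b) \<in> E. b \<in> ?W1 - ?C} \<union> {(a,b) \<in> E. b \<in> ?W2 - ?C} \<union> consec ?C"
    using spl_eq ne1 ne2' CC by simp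
  also have "\<dots> = {(a,b) \<in> E. b \<notin> ?C} \<union> consec ?C" using edge_in by blast
  also have "\<dots> = E" using E_split[OF vV] by simp
  finally have eE: "edges (spl T1 v T2 t) = E" .
  have eV: "verts (spl T1 v T2 t) = V" using spl_eq[of T1 v T2 t] VT1 VT2 W1_sub[of v] by auto
  have eq: "T = spl T1 v T2 t" using eE eV by (metis prod.collapse)
  have disj: "verts T1 \<inter> verts T2 = {}" using VT1 VT2 by auto
  have anc_ok: "(i,j) \<in> (edges (restr T v W))\<^sup>+"
    if cl: "wclosed v W" and B: "B \<in> blocks_in P W" and ij: "i \<in> B" "j \<in> B" "i < j" for W B i j
  proof -
    have W: "W \<subseteq> V" using cl unfolding wclosed_def by auto
    have BV: "B \<in> blocks_in P V" using B W unfolding blocks_in_def by auto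
    have "(i,j) \<in> E\<^sup>*" using pi_anc[OF BV ij(1,2)] ij(3) by simp
    moreover have "i \<in> W" "j \<in> W" using B ij bin_sub by blast+
    ultimately have "i \<in> anc (restr T v W) j" using restr_anc[OF vV cl] unfolding anc_def by blast
    hence "(i,j) \<in> (edges (restr T v W))\<^sup>*" unfolding anc_def by simp
    thus ?thesis using ij(3) by (metis less_irrefl rtrancl_eq_or_trancl)
  qed
  have p1: "pi_inc_tree P T1" unfolding pi_inc_tree_def using inc1 ublk1 VT1 anc_ok[OF cl1]
    unfolding ublk_def T1_def by (simp add: restr_verts)
  have p2: "pi_inc_tree P T2" unfolding pi_inc_tree_def using inc2 ublk2 VT2 anc_ok[OF cl2]
    unfolding ublk_def T2_def by (simp add: restr_verts)
  have R: "dep_edges P T v = dep_edges P T1 v \<union> dep_edges P T2 t"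
    using dep_spl[OF p1 p2 disj _ _ tv eq] v1 tin VT1 VT2 by blast
  interpret Q2: pitree T2 r P using p2 std unfolding pi_inc_tree_def
    by unfold_locales (auto simp: pi_inc_tree_def)
  have tV2: "t \<in> verts T2" using tin VT2 by simp
  have tok: "(blk P v, B) \<in> (sy (dep_edges P T1 v))\<^sup>*" if B: "B \<in> Kc v" for B
  proof -
    have path: "(blk P v, B) \<in> (sy (dep_edges P T v))\<^sup>*" using B unfolding Kc_def by simp
    have st: "(a,b) \<in> dep_edges P T1 v \<and> a \<in> Kc v \<and> b \<in> Kc v"
      if ab: "(a,b) \<in> dep_edges P T v" "a \<in> Kc v \<or> b \<in> Kc v" for a b
    proof -
      have k: "a \<in> Kc v" "b \<in> Kc v" using Kc_closed[OF vV ab(1)] ab(2) by blast+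
      have "(a,b) \<notin> dep_edges P T2 t"
      proof
        assume "(a,b) \<in> dep_edges P T2 t"
        hence "a \<in> blocks_in P (verts T2)" using Q2.dep_tgt[OF tV2] by blast
        moreover have "a \<in> blocks_in P (verts T1)" using k blocks_W1 VT1 by simp
        ultimately show False using blocks_disj[OF disj] by blast
      qed
      thus ?thesis using ab(1) R k by blast
    qed
    show ?thesis using sy_restrict[OF path vK[OF vV] st] by blast
  qed
  have con: "dep_connected P T1 v"
    unfolding dep_connected_def
  proof (intro ballI)
    fix B1 B2 assume B: "B1 \<in> blocks_in P (verts T1)" "B2 \<in> blocks_in P (verts T1)"
    hence "B1 \<in> Kc v" "B2 \<in> Kc v" using blocks_W1 VT1 by auto
    hence a: "(blk P v, B1) \<in> (sy (dep_edges P T1 v))\<^sup>*" and b: "(blk P v, B2) \<in> (sy (dep_edges P T1 v))\<^sup>*"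
      using tok by blast+
    have "(B1, blk P v) \<in> (sy (dep_edges P T1 v))\<^sup>*" using sy_sym[OF a] .
    thus "(B1,B2) \<in> (sy (dep_edges P T1 v))\<^sup>*" using b by (rule rtrancl_trans)
  qed
  have v1': "v \<in> verts T1" using v1 VT1 by simp
  show ?thesis by (intro conjI) (fact p1 p2 disj v1' tV2 tv eq con VT1 VT2)+
qed

end

lemma (in pitree) dep_loop: assumes v: "v \<in> V"
  shows "(x,z) \<in> (dep_edges P T v)\<^sup>* \<Longrightarrow> (x,x) \<in> dep_edges P T v \<Longrightarrow> x = z"
proof (induction rule: converse_rtrancl_induct)
  case (step y w)
  have "w = y" using dep_sv[OF v step(1) step(4)] .
  thus ?case using step by simp
qed simp

locale mainl = pitree T r P for T r P + assumes two: "card (blocks_in P (verts T)) \<ge> 2"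
begin

definition "MM = Max V"
abbreviation "PM \<equiv> blk P MM"

lemma MV: "MM \<in> V" unfolding MM_def using finV neV by simp
lemma Mge: "x \<in> V \<Longrightarrow> x \<le> MM" unfolding MM_def using finV by simp
lemma MC: "MM \<in> chain T MM" using v_chain[OF MV] .
lemma PMb: "PM \<in> blocks_in P V" using blkV[OF MV] .
lemma MPM: "MM \<in> PM" using blk_in Vsub MV by blast
lemma MaxPM: "Max PM = MM"
proof -
  have sub: "PM \<subseteq> V" using PMb bin_sub by blast
  have fin: "finite PM" using finV sub finite_subset by blast
  have "\<And>x. x \<in> PM \<Longrightarrow> x \<le> MM" using sub Mge by blast
  thus ?thesis using Max_eqI[OF fin _ MPM] by blast
qed

lemma other_block: "\<exists>B\<in>blocks_in P V. B \<noteq> PM"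
proof (rule ccontr)
  assume "\<not> (\<exists>B\<in>blocks_in P V. B \<noteq> PM)"
  hence "blocks_in P V \<subseteq> {PM}" by auto
  hence "card (blocks_in P V) \<le> card {PM}" by (intro card_mono) auto
  hence "card (blocks_in P V) \<le> 1" by simp
  thus False using two by simp
qed

lemma VmPM: "V - PM \<noteq> {}"
proof -
  obtain B where B: "B \<in> blocks_in P V" "B \<noteq> PM" using other_block by blast
  obtain x where x: "x \<in> B" using P_ne B unfolding blocks_in_def by blast
  have "x \<in> V" using B x bin_sub by blast
  moreover have "x \<notin> PM" using bin_blk[OF B(1) x] bin_blk[OF PMb] B(2) by metis
  ultimately show ?thesis by blast
qed

lemma M_ne1: "MM \<noteq> 1"
proof
  assume M1: "MM = 1"
  obtain x where "x \<in> V - PM" using VmPM by blast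
  hence "x \<le> 1" "x \<ge> 1" "x \<noteq> 1" using Mge M1 Vsub MPM by auto
  thus False by simp
qed

lemma sink_M: assumes con: "dep_connected P T MM" and B: "B \<in> blocks_in P V"
  shows "(B, PM) \<in> (dep_edges P T MM)\<^sup>*"
proof -
  let ?R = "dep_edges P T MM"
  have zs: "\<And>b. (PM, b) \<notin> ?R" using dep_iff[OF MV] MaxPM MC by simp
  have cl: "(a, PM) \<in> ?R\<^sup>* \<longleftrightarrow> (b, PM) \<in> ?R\<^sup>*" if "(a,b) \<in> ?R" for a b
    by (rule sink_closed[OF dep_sv[OF MV] zs that])
  have "(PM, B) \<in> (sy ?R)\<^sup>*" using con PMb B unfolding dep_connected_def by blast
  hence "PM \<in> {x. (x,PM) \<in> ?R\<^sup>*} \<longleftrightarrow> B \<in> {x. (x,PM) \<in> ?R\<^sup>*}"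
    by (rule sy_closed) (simp add: cl)
  thus ?thesis by simp
qed

lemma sink_M1: assumes con: "dep_connected P T MM" and B: "B \<in> blocks_in P V"
  and mc: "Max B \<in> chain T MM" shows "B = PM"
proof -
  have "(B, PM) \<in> (dep_edges P T MM)\<^sup>*" using sink_M[OF con B] .
  thus ?thesis
  proof (cases rule: converse_rtranclE)
    case (step c) thus ?thesis using dep_iff[OF MV] mc by simp
  qed simp
qed

lemma sink_M2: assumes con: "dep_connected P T MM" and B: "B \<in> blocks_in P V"
  and l: "(B,B) \<in> dep_edges P T MM" shows "B = PM"
  using dep_loop[OF MV] sink_M[OF con B] l by blast

lemma one_not_W1: assumes "1 \<in> V" shows "1 \<notin> W1 MM"
proof -
  let ?R = "dep_edges P T MM" let ?C = "chain T MM"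
  have rt1: "rt = 1"
  proof -
    have "rt \<le> 1" using rt_le assms by simp
    moreover have "rt \<ge> 1" using rt_in Vsub by auto
    ultimately show ?thesis by simp
  qed
  define X where "X = {B \<in> blocks_in P V. B = {1} \<or> (Max B \<notin> ?C \<and> anch T MM (Max B) = 1)}"
  have b1: "blk P 1 = {1}" using blk1 .
  have one_in: "{1} \<in> X" unfolding X_def using blkV[OF assms] b1 by simp
  have cl: "a \<in> X \<longleftrightarrow> b \<in> X" if ab: "(a,b) \<in> ?R" for a b
  proof -
    have h: "a \<in> blocks_in P V" "Max a \<notin> ?C" "b = blk P (anch T MM (Max a))"
      using ab dep_iff[OF MV] by auto
    have bb: "b \<in> blocks_in P V" using dep_tgt[OF MV ab] by simp
    have maV: "Max a \<in> V" using bin_Max h by blast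
    let ?al = "anch T MM (Max a)"
    have alC: "?al \<in> ?C" using anch_props(1)[OF MV maV] .
    have alV: "?al \<in> V" using alC chain_sub by blast
    have alb: "?al \<in> b" using h(3) blk_in Vsub alV by blast
    show ?thesis
    proof
      assume "a \<in> X"
      moreover have "a \<noteq> {1}" using h(2) rt1 rt_chain[OF MV] by auto
      ultimately have "?al = 1" unfolding X_def by auto
      thus "b \<in> X" using h(3) b1 one_in by simp
    next
      assume bX: "b \<in> X"
      show "a \<in> X"
      proof (cases "b = {1}")
        case True
        hence "?al = 1" using alb by simp
        thus ?thesis unfolding X_def using h by simp
      next
        case False
        hence mb: "Max b \<notin> ?C" "anch T MM (Max b) = 1" using bX unfolding X_def by auto
        have mbV: "Max b \<in> V" using bin_Max bb by blast
        have "?al \<le> Max b" using bin_Max(3)[OF bb alb] .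
        hence "(?al, Max b) \<in> E\<^sup>*" using pi_anc[OF bb alb bin_Max(1)[OF bb]] by simp
        hence "?al \<le> 1" using anch_props(3)[OF MV mbV alC] mb by simp
        moreover have "?al \<ge> 1" using alV Vsub by auto
        ultimately have "?al = 1" by simp
        hence "b = {1}" using h(3) b1 by simp
        thus ?thesis using False by simp
      qed
    qed
  qed
  have "PM \<notin> X" unfolding X_def using MaxPM MC M_ne1 MPM by auto
  have "{1} \<notin> Kc MM"
  proof
    assume "{1} \<in> Kc MM"
    hence "(PM, {1}) \<in> (sy ?R)\<^sup>*" unfolding Kc_def by simp
    hence "PM \<in> X \<longleftrightarrow> {1} \<in> X" by (rule sy_closed) (rule cl)
    thus False using \<open>PM \<notin> X\<close> one_in by simp
  qed
  thus ?thesis using W1_iff[OF assms] b1 by simp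
qed

lemma red_ne: assumes "\<not> dep_connected P T MM" shows "W1 MM \<noteq> V"
proof
  assume W: "W1 MM = V"
  hence K: "Kc MM = blocks_in P V" using blocks_W1[of MM] by simp
  have "dep_connected P T MM" unfolding dep_connected_def
  proof (intro ballI)
    fix B1 B2 assume "B1 \<in> blocks_in P V" "B2 \<in> blocks_in P V"
    hence a: "(blk P MM, B1) \<in> (sy (dep_edges P T MM))\<^sup>*" and b: "(blk P MM, B2) \<in> (sy (dep_edges P T MM))\<^sup>*"
      using K unfolding Kc_def by auto
    show "(B1,B2) \<in> (sy (dep_edges P T MM))\<^sup>*" using sy_sym[OF a] b by (rule rtrancl_trans)
  qed
  thus False using assms by simp
qed

end

locale irrl = mainl T r P for T r P + assumes con: "dep_connected P T MM"
begin

definition "mm = Max (V - PM)"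
abbreviation "Pm \<equiv> blk P mm"
abbreviation "CM \<equiv> chain T MM"
abbreviation "Cm \<equiv> chain T mm"
definition "cc = anch T mm MM"

lemma mm_in: "mm \<in> V - PM" unfolding mm_def using VmPM finV by (meson Max_in finite_Diff)
lemma mm_ge: "x \<in> V - PM \<Longrightarrow> x \<le> mm" unfolding mm_def using finV by simp
lemma mmV: "mm \<in> V" using mm_in by simp
lemma mm_less: "mm < MM" using mm_in Mge MPM by (metis DiffD1 DiffD2 le_neq_implies_less)

lemma Pmb: "Pm \<in> blocks_in P V" using blkV[OF mmV] .
lemma mPm: "mm \<in> Pm" using blk_in Vsub mmV by blast
lemma Pm_ne: "Pm \<noteq> PM" using mPm mm_in bin_blk[OF PMb] by auto

lemma Pm_sub: "Pm \<subseteq> V - PM"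
proof
  fix x assume x: "x \<in> Pm"
  have "x \<in> V" using x Pmb bin_sub by blast
  moreover have "x \<notin> PM"
  proof
    assume "x \<in> PM"
    hence "blk P x = PM" using bin_blk[OF PMb] by simp
    moreover have "blk P x = Pm" using bin_blk[OF Pmb x] .
    ultimately show False using Pm_ne by simp
  qed
  ultimately show "x \<in> V - PM" by simp
qed

lemma MaxPm: "Max Pm = mm"
proof -
  have fin: "finite Pm" using finV Pm_sub finite_subset by blast
  have "\<And>x. x \<in> Pm \<Longrightarrow> x \<le> mm" using Pm_sub mm_ge by blast
  thus ?thesis using Max_eqI[OF fin _ mPm] by blast
qed

lemma m_notCM: "mm \<notin> CM"
proof
  assume "mm \<in> CM"
  hence "Pm = PM" using sink_M1[OF con Pmb] MaxPm by simp
  thus False using Pm_ne by simp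
qed

lemma M_notCm: "MM \<notin> Cm" using chain_le mm_less by fastforce

lemma cc_props: "cc \<in> Cm" "cc \<in> CM" "\<And>z. z \<in> Cm \<Longrightarrow> z \<in> CM \<Longrightarrow> z \<le> cc"
proof -
  show c1: "cc \<in> Cm" unfolding cc_def using anch_props(1)[OF mmV MV] .
  have "(cc, MM) \<in> E\<^sup>*" unfolding cc_def using anch_props(2)[OF mmV MV] .
  thus "cc \<in> CM" using chain_closed[OF MC] by blast
  fix z assume "z \<in> Cm" "z \<in> CM"
  thus "z \<le> cc" unfolding cc_def using anch_props(3)[OF mmV MV] chain_eq[OF MV] by blast
qed

lemma cc_V: "cc \<in> V" using cc_props chain_sub by blast
lemma cc_less: "cc < mm" using cc_props chain_le m_notCM by (metis le_neq_implies_less)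

lemma Cm_CM: "d \<in> Cm \<Longrightarrow> d \<le> cc \<Longrightarrow> d \<in> CM"
  using chain_comp[of d mm cc] cc_props chain_closed[of cc MM d] by blast
lemma CM_Cm: "d \<in> CM \<Longrightarrow> d \<le> cc \<Longrightarrow> d \<in> Cm"
  using chain_comp[of d MM cc] cc_props chain_closed[of cc mm d] by blast

lemma L1: assumes x: "x \<in> V" "x \<notin> CM" "(cc,x) \<notin> E\<^sup>*"
  shows "x \<notin> Cm" "anch T mm x = anch T MM x"
proof -
  have eq: "Cm \<inter> anc T x = CM \<inter> anc T x"
  proof (rule set_eqI, rule iffI)
    fix d assume d: "d \<in> Cm \<inter> anc T x"
    have "\<not> cc \<le> d"
    proof
      assume "cc \<le> d"
      hence "(cc,d) \<in> E\<^sup>*" using chain_comp[of cc mm d] cc_props d by blast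
      hence "(cc,x) \<in> E\<^sup>*" using d unfolding anc_def by (meson IntD2 mem_Collect_eq rtrancl_trans)
      thus False using x by simp
    qed
    thus "d \<in> CM \<inter> anc T x" using Cm_CM d by auto
  next
    fix d assume d: "d \<in> CM \<inter> anc T x"
    have "\<not> cc \<le> d"
    proof
      assume "cc \<le> d"
      hence "(cc,d) \<in> E\<^sup>*" using chain_comp[of cc MM d] cc_props d by blast
      hence "(cc,x) \<in> E\<^sup>*" using d unfolding anc_def by (meson IntD2 mem_Collect_eq rtrancl_trans)
      thus False using x by simp
    qed
    thus "d \<in> Cm \<inter> anc T x" using CM_Cm d by auto
  qed
  show "anch T mm x = anch T MM x" unfolding anch_def using eq by simp
  show "x \<notin> Cm"
  proof
    assume "x \<in> Cm"
    hence "x \<in> Cm \<inter> anc T x" unfolding anc_def by simp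
    thus False using eq x by blast
  qed
qed

lemma L2: assumes x: "x \<in> V" "(cc,x) \<in> E\<^sup>*" "anch T MM x \<noteq> cc"
  shows "x \<notin> Cm" "anch T mm x = cc"
proof -
  let ?a = "anch T MM x"
  have aC: "?a \<in> CM" "(?a, x) \<in> E\<^sup>*" using anch_props(1,2)[OF MV x(1)] by auto
  have "cc \<le> ?a" using anch_props(3)[OF MV x(1)] cc_props x(2) by blast
  hence ca: "cc < ?a" using x(3) by simp
  have anm: "?a \<notin> Cm" using cc_props(3) aC ca by fastforce
  have sub: "\<And>d. d \<in> Cm \<Longrightarrow> (d,x) \<in> E\<^sup>* \<Longrightarrow> d \<le> cc"
  proof -
    fix d assume d: "d \<in> Cm" "(d,x) \<in> E\<^sup>*"
    from anc_cases[OF d(2) aC(2)] show "d \<le> cc"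
    proof
      assume "(d, ?a) \<in> E\<^sup>*"
      hence "d \<in> CM" using chain_closed[OF aC(1)] by blast
      thus ?thesis using cc_props(3) d by blast
    next
      assume "(?a, d) \<in> E\<^sup>*"
      hence "?a \<in> Cm" using chain_closed[OF d(1)] by blast
      thus ?thesis using anm by simp
    qed
  qed
  have "cc \<le> anch T mm x" using anch_props(3)[OF mmV x(1)] cc_props x(2) by blast
  moreover have "anch T mm x \<le> cc" using sub anch_props(1,2)[OF mmV x(1)] by blast
  ultimately show "anch T mm x = cc" by simp
  show "x \<notin> Cm" using chain_closed[of x mm ?a] aC anm by blast
qed


abbreviation "Pc \<equiv> blk P cc"
abbreviation "Rm \<equiv> dep_edges P T mm"
abbreviation "RM \<equiv> dep_edges P T MM"

lemma Pcb: "Pc \<in> blocks_in P V" using blkV[OF cc_V] .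
lemma cPc: "cc \<in> Pc" using blk_in Vsub cc_V by blast

lemma Pc_loop: "(Pc, Pc) \<in> Rm"
proof (cases "Pc = PM")
  case True
  thus ?thesis using dep_iff[OF mmV] Pcb MaxPM M_notCm cc_def by simp
next
  case False
  let ?mu = "Max Pc"
  have muV: "?mu \<in> V" using bin_Max Pcb by blast
  have mu1: "?mu \<notin> CM" using sink_M1[OF con Pcb] False by blast
  have cmu: "(cc, ?mu) \<in> E\<^sup>*" using pi_anc[OF Pcb cPc bin_Max(1)[OF Pcb] bin_Max(3)[OF Pcb cPc]] .
  have "anch T MM ?mu \<noteq> cc"
  proof
    assume "anch T MM ?mu = cc"
    hence "(Pc,Pc) \<in> RM" using dep_iff[OF MV] Pcb mu1 by simp
    thus False using sink_M2[OF con Pcb] False by simp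
  qed
  hence "?mu \<notin> Cm" "anch T mm ?mu = cc" using L2[OF muV cmu] by auto
  thus ?thesis using dep_iff[OF mmV] Pcb by simp
qed

lemma PM_Pc: "(PM, Pc) \<in> Rm"
  using dep_iff[OF mmV] PMb MaxPM M_notCm cc_def by simp

lemma PM_notK: "PM \<notin> Kc mm"
proof
  assume K: "PM \<in> Kc mm"
  have zs: "\<And>b. (Pm, b) \<notin> Rm" using dep_iff[OF mmV] MaxPm v_chain[OF mmV] by simp
  have cl: "(a, Pm) \<in> Rm\<^sup>* \<longleftrightarrow> (b, Pm) \<in> Rm\<^sup>*" if "(a,b) \<in> Rm" for a b
    by (rule sink_closed[OF dep_sv[OF mmV] zs that])
  have "(Pm, PM) \<in> (sy Rm)\<^sup>*" using K unfolding Kc_def by simp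
  hence "Pm \<in> {x. (x,Pm) \<in> Rm\<^sup>*} \<longleftrightarrow> PM \<in> {x. (x,Pm) \<in> Rm\<^sup>*}"
    by (rule sy_closed) (simp add: cl)
  hence p: "(PM, Pm) \<in> Rm\<^sup>*" by simp
  have "(Pc, Pm) \<in> Rm\<^sup>*"
    using p
  proof (cases rule: converse_rtranclE)
    case base thus ?thesis using Pm_ne by simp
  next
    case (step c)
    have "c = Pc" using dep_sv[OF mmV step(1) PM_Pc] .
    thus ?thesis using step by simp
  qed
  hence "Pc = Pm" using dep_loop[OF mmV] Pc_loop by blast
  thus False using zs Pc_loop by simp
qed

lemma M_notW1: "MM \<notin> W1 mm" using W1_iff[OF MV] PM_notK by simp
lemma cc_notW1: "cc \<notin> W1 mm" using W1_anch[OF mmV MV M_notCm] M_notW1 cc_def by simp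
lemma W1ne: "W1 mm \<noteq> V" using M_notW1 MV by blast

lemma W1_PM: "W1 mm \<subseteq> V - PM"
proof
  fix x assume x: "x \<in> W1 mm"
  have xV: "x \<in> V" using x W1_sub by blast
  have "x \<notin> PM"
  proof
    assume "x \<in> PM"
    hence "blk P x = PM" using bin_blk[OF PMb] by simp
    thus False using W1_iff[OF xV] x PM_notK by simp
  qed
  thus "x \<in> V - PM" using xV by simp
qed

lemma MaxW1: "Max (W1 mm) = mm"
proof -
  have fin: "finite (W1 mm)" using W1_sub finV finite_subset by blast
  have "\<And>x. x \<in> W1 mm \<Longrightarrow> x \<le> mm" using W1_PM mm_ge by blast
  thus ?thesis using Max_eqI[OF fin _ vW1[OF mmV]] by blast
qed

lemma N1: assumes x: "x \<in> V - W1 mm" "x \<notin> CM" shows "anch T MM x \<in> V - W1 mm"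
proof -
  have xV: "x \<in> V" using x by simp
  have aV: "anch T MM x \<in> V" using anch_props(1)[OF MV xV] chain_sub by blast
  show ?thesis
  proof (cases "(cc,x) \<in> E\<^sup>*")
    case False
    have "x \<notin> Cm" "anch T mm x = anch T MM x" using L1[OF xV x(2) False] by auto
    thus ?thesis using W1_anch[OF mmV xV] x aV by simp
  next
    case True
    show ?thesis
    proof (cases "anch T MM x = cc")
      case True thus ?thesis using cc_notW1 cc_V by simp
    next
      case False
      let ?a = "anch T MM x"
      have aC: "?a \<in> CM" using anch_props(1)[OF MV xV] .
      have "cc \<le> ?a" using anch_props(3)[OF MV xV] cc_props \<open>(cc,x) \<in> E\<^sup>*\<close> by blast
      hence ca: "(cc, ?a) \<in> E\<^sup>*" using chain_comp[OF _ aC] cc_props by blast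
      have "anch T MM ?a = ?a" using anch_chain[OF aC] .
      hence "?a \<notin> Cm" "anch T mm ?a = cc" using L2[OF aV ca] False by auto
      thus ?thesis using W1_anch[OF mmV aV] cc_notW1 aV by simp
    qed
  qed
qed

lemma N2: assumes x: "x \<in> W1 mm" "x \<notin> CM" shows "anch T MM x \<in> W1 mm \<or> anch T MM x = cc"
proof -
  have xV: "x \<in> V" using x W1_sub by blast
  show ?thesis
  proof (cases "(cc,x) \<in> E\<^sup>*")
    case False
    have "x \<notin> Cm" "anch T mm x = anch T MM x" using L1[OF xV x(2) False] by auto
    thus ?thesis using W1_anch[OF mmV xV] x by simp
  next
    case True
    show ?thesis
    proof (rule ccontr)
      assume "\<not> ?thesis"
      hence "x \<notin> Cm" "anch T mm x = cc" using L2[OF xV True] by auto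
      thus False using W1_anch[OF mmV xV] x cc_notW1 by simp
    qed
  qed
qed

end

lemma Max_Int_eq: assumes "finite S" "Max S \<in> W" "S \<noteq> {}" shows "Max (S \<inter> W) = Max S"
proof -
  have "Max S \<in> S \<inter> W" using Max_in[OF assms(1,3)] assms(2) by simp
  moreover have "\<And>x. x \<in> S \<inter> W \<Longrightarrow> x \<le> Max S" using assms(1) by simp
  ultimately show ?thesis using Max_eqI[of "S \<inter> W"] assms(1) by blast
qed

context irrl begin

abbreviation "W2 \<equiv> V - W1 mm"
abbreviation "TT2 \<equiv> restr T mm W2"

lemma MW2: "MM \<in> W2" using MV M_notW1 by simp
lemma MaxW2: "Max W2 = MM"
proof -
  have fin: "finite W2" using finV by simp
  have "\<And>x. x \<in> W2 \<Longrightarrow> x \<le> MM" using Mge by simp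
  thus ?thesis using Max_eqI[OF fin _ MW2] by blast
qed

lemma T2_irr: "pi_inc_tree P TT2 \<Longrightarrow> dep_connected P TT2 (Max (verts TT2))"
proof -
  assume p2: "pi_inc_tree P TT2"
  interpret Q2: pitree TT2 r P using p2 std unfolding pi_inc_tree_def
    by unfold_locales (auto simp: pi_inc_tree_def)
  have ne2: "W2 \<noteq> {}" using MW2 by blast
  have cl2: "wclosed mm W2" using wcl2[OF mmV ne2] .
  have VT2: "verts TT2 = W2" using restr_verts .
  have M2: "MM \<in> verts TT2" using VT2 MW2 by simp
  have mx: "Max (verts TT2) = MM" using VT2 MaxW2 by simp
  have ra: "\<And>y. y \<in> W2 \<Longrightarrow> anc TT2 y = anc T y \<inter> W2" using restr_anc[OF mmV cl2] by blast
  have ch2: "chain TT2 MM = CM \<inter> W2" using Q2.chain_anc[OF M2] ra[OF MW2] chain_anc[OF MV] by simp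
  have an2: "anch TT2 MM x = anch T MM x" if x: "x \<in> W2" "x \<notin> CM" for x
  proof -
    have xV: "x \<in> V" using x by simp
    have "anch TT2 MM x = Max (CM \<inter> anc T x \<inter> W2)"
      unfolding anch_def using ch2 ra[OF x(1)] by (simp add: Int_ac)
    also have "\<dots> = Max (CM \<inter> anc T x)"
    proof (rule Max_Int_eq)
      show "finite (CM \<inter> anc T x)" using chain_fin by simp
      show "Max (CM \<inter> anc T x) \<in> W2" using N1[OF x] unfolding anch_def .
      show "CM \<inter> anc T x \<noteq> {}" using anch_props(1,2)[OF MV xV] unfolding anc_def by blast
    qed
    finally show ?thesis unfolding anch_def .
  qed
  have notK: "B \<in> blocks_in P W2" if "B \<in> blocks_in P V" "B \<notin> Kc mm" for B
  proof -
    have "B \<subseteq> W1 mm \<or> B \<subseteq> W2"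
      using ublk_split[OF ublkV that(1) _ ublk1] W1_sub by blast
    moreover have "\<not> B \<subseteq> W1 mm" using that blocks_W1[of mm] unfolding blocks_in_def by auto
    ultimately show ?thesis using that(1) unfolding blocks_in_def by auto
  qed
  have inW2: "B \<notin> Kc mm" if "B \<in> blocks_in P W2" for B
    using that blocks_disj[of "W1 mm" W2] blocks_W1[of mm] by blast
  define f where "f B = (if B \<in> Kc mm then Pc else B)" for B
  have Pc_nK: "Pc \<notin> Kc mm" using W1_iff[OF cc_V] cc_notW1 by simp
  have fe: "f a = f b \<or> (f a, f b) \<in> dep_edges P TT2 MM" if ab: "(a,b) \<in> RM" for a b
  proof -
    have h: "a \<in> blocks_in P V" "Max a \<notin> CM" "b = blk P (anch T MM (Max a))"
      using ab dep_iff[OF MV] by auto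
    have maV: "Max a \<in> V" using bin_Max h(1) by blast
    have yV: "anch T MM (Max a) \<in> V" using anch_props(1)[OF MV maV] chain_sub by blast
    show ?thesis
    proof (cases "a \<in> Kc mm")
      case True
      have "a \<in> blocks_in P (W1 mm)" using True blocks_W1 by simp
      hence maW: "Max a \<in> W1 mm" using bin_Max by blast
      from N2[OF maW h(2)] show ?thesis
      proof
        assume "anch T MM (Max a) \<in> W1 mm"
        hence "b \<in> Kc mm" using W1_iff[OF yV] h(3) by simp
        thus ?thesis using True unfolding f_def by simp
      next
        assume "anch T MM (Max a) = cc"
        hence "b = Pc" using h(3) by simp
        thus ?thesis using True Pc_nK unfolding f_def by simp
      qed
    next
      case False
      have aW: "a \<in> blocks_in P W2" using notK h(1) False by blast
      have maW: "Max a \<in> W2" using bin_Max aW by blast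
      have yW: "anch T MM (Max a) \<in> W2" using N1[OF maW h(2)] .
      have bK: "b \<notin> Kc mm" using W1_iff[OF yV] yW h(3) by simp
      have "(a,b) \<in> dep_edges P TT2 MM"
        using Q2.dep_iff[OF M2] VT2 aW ch2 h an2[OF maW h(2)] by simp
      thus ?thesis using False bK unfolding f_def by simp
    qed
  qed
  show ?thesis unfolding dep_connected_def mx
  proof (intro ballI)
    fix B1 B2 assume B: "B1 \<in> blocks_in P (verts TT2)" "B2 \<in> blocks_in P (verts TT2)"
    have BV: "B1 \<in> blocks_in P V" "B2 \<in> blocks_in P V" using B VT2 unfolding blocks_in_def by auto
    have "(B1,B2) \<in> (sy RM)\<^sup>*" using con BV unfolding dep_connected_def by blast
    hence "(f B1, f B2) \<in> (sy (dep_edges P TT2 MM))\<^sup>*" by (rule sy_map) (rule fe)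
    moreover have "f B1 = B1" "f B2 = B2" using inW2 B VT2 unfolding f_def by auto
    ultimately show "(B1,B2) \<in> (sy (dep_edges P TT2 MM))\<^sup>*" by simp
  qed
qed

end

theorem lemma3p10:
  fixes r :: nat and P :: "nat set set" and T :: tree
  assumes std: "std_partition r P"
    and T: "pi_inc_tree P T"
    and two: "card (blocks_in P (verts T)) \<ge> 2"
  defines "M \<equiv> Max (verts T)"
    and "m \<equiv> Max (verts T - blk P (Max (verts T)))"
  shows
    "(reducible_tree P T \<longrightarrow>
        (\<exists>!(T1,T2,t). pi_inc_tree P T1 \<and> pi_inc_tree P T2
            \<and> verts T1 \<inter> verts T2 = {} \<and> M \<in> verts T1 \<and> t \<in> verts T2 \<and> t < M
            \<and> irreducible_tree P T1 \<and> T = spl T1 M T2 t)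
      \<and> (\<forall>T1 T2 t. pi_inc_tree P T1 \<and> pi_inc_tree P T2
            \<and> verts T1 \<inter> verts T2 = {} \<and> M \<in> verts T1 \<and> t \<in> verts T2 \<and> t < M
            \<and> irreducible_tree P T1 \<and> T = spl T1 M T2 t
            \<longrightarrow> 1 \<in> verts T \<longrightarrow> 1 \<in> verts T2))
   \<and> (irreducible_tree P T \<longrightarrow>
        (\<exists>!(T1,T2,t). pi_inc_tree P T1 \<and> pi_inc_tree P T2
            \<and> verts T1 \<inter> verts T2 = {} \<and> m \<in> verts T1 \<and> t \<in> verts T2 \<and> M \<in> verts T2
            \<and> t < m \<and> irreducible_tree P T1 \<and> irreducible_tree P T2
            \<and> T = spl T1 m T2 t))"
proof -
  interpret mainl T r P using std T two unfolding pi_inc_tree_def std_partition_def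
    by unfold_locales (auto simp: pi_inc_tree_def std_partition_def)
  have MM: "M = MM" unfolding M_def MM_def ..
  have spV: "verts T = verts T1 \<union> verts T2" if "T = spl T1 v T2 t" for T1 T2 v t
    using that spl_eq by (metis fst_conv)
  have partA: "reducible_tree P T \<longrightarrow>
        (\<exists>!(T1,T2,t). pi_inc_tree P T1 \<and> pi_inc_tree P T2
            \<and> verts T1 \<inter> verts T2 = {} \<and> M \<in> verts T1 \<and> t \<in> verts T2 \<and> t < M
            \<and> irreducible_tree P T1 \<and> T = spl T1 M T2 t)
      \<and> (\<forall>T1 T2 t. pi_inc_tree P T1 \<and> pi_inc_tree P T2
            \<and> verts T1 \<inter> verts T2 = {} \<and> M \<in> verts T1 \<and> t \<in> verts T2 \<and> t < M
            \<and> irreducible_tree P T1 \<and> T = spl T1 M T2 t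
            \<longrightarrow> 1 \<in> verts T \<longrightarrow> 1 \<in> verts T2)"
  proof
    assume red: "reducible_tree P T"
    hence nc: "\<not> dep_connected P T MM" unfolding reducible_tree_def MM_def by simp
    have ne: "W1 MM \<noteq> V" using red_ne[OF nc] .
    define T1 where "T1 = restr T MM (W1 MM)"
    define T2 where "T2 = restr T MM (V - W1 MM)"
    define t where "t = Max (chain T MM \<inter> (V - W1 MM))"
    have G: "pi_inc_tree P T1 \<and> pi_inc_tree P T2 \<and> verts T1 \<inter> verts T2 = {} \<and> MM \<in> verts T1
      \<and> t \<in> verts T2 \<and> t < MM \<and> T = spl T1 MM T2 t \<and> dep_connected P T1 MM
      \<and> verts T1 = W1 MM \<and> verts T2 = V - W1 MM"
      unfolding T1_def T2_def t_def by (rule G_ex[OF MV ne])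
    have g: "pi_inc_tree P T1" "pi_inc_tree P T2" "verts T1 \<inter> verts T2 = {}" "MM \<in> verts T1"
      "t \<in> verts T2" "t < MM" "T = spl T1 MM T2 t" "dep_connected P T1 MM"
      "verts T1 = W1 MM" "verts T2 = V - W1 MM" using G by blast+
    have mx1: "Max (verts T1) = MM"
    proof -
      have sub: "verts T1 \<subseteq> V" using g(9) W1_sub by simp
      have fin: "finite (verts T1)" using sub finV finite_subset by blast
      have "\<And>x. x \<in> verts T1 \<Longrightarrow> x \<le> MM" using sub Mge by blast
      thus ?thesis using Max_eqI[OF fin _ g(4)] by blast
    qed
    let ?Phi = "\<lambda>T1 T2 t. pi_inc_tree P T1 \<and> pi_inc_tree P T2
            \<and> verts T1 \<inter> verts T2 = {} \<and> M \<in> verts T1 \<and> t \<in> verts T2 \<and> t < M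
            \<and> irreducible_tree P T1 \<and> T = spl T1 M T2 t"
    have phi: "?Phi T1 T2 t" unfolding irreducible_tree_def MM mx1 using g by simp
    have un: "T1' = restr T MM (W1 MM) \<and> T2' = restr T MM (V - W1 MM) \<and> t' = Max (chain T MM \<inter> (V - W1 MM))
       \<and> verts T1' = W1 MM" if h: "?Phi T1' T2' t'" for T1' T2' t'
    proof -
      have h': "pi_inc_tree P T1'" "pi_inc_tree P T2'" "verts T1' \<inter> verts T2' = {}" "MM \<in> verts T1'"
        "t' \<in> verts T2'" "t' < MM" "irreducible_tree P T1'" "T = spl T1' MM T2' t'"
        using h unfolding MM by blast+
      have V1: "verts T1' \<subseteq> V" using spV[OF h'(8)] by blast
      have fin: "finite (verts T1')" using V1 finV finite_subset by blast
      have "\<And>x. x \<in> verts T1' \<Longrightarrow> x \<le> MM" using V1 Mge by blast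
      hence "Max (verts T1') = MM" using Max_eqI[OF fin _ h'(4)] by blast
      hence c: "dep_connected P T1' MM" using h'(7) unfolding irreducible_tree_def by simp
      note U = G_uniq[OF h'(1,2,3,4,5,6,8) c]
      show ?thesis using U by simp
    qed
    show "(\<exists>!(T1,T2,t). ?Phi T1 T2 t) \<and> (\<forall>T1 T2 t. ?Phi T1 T2 t \<longrightarrow> 1 \<in> verts T \<longrightarrow> 1 \<in> verts T2)"
    proof
      show "\<exists>!(T1,T2,t). ?Phi T1 T2 t"
      proof (rule ex1I[of _ "(T1,T2,t)"])
        show "case (T1,T2,t) of (T1,T2,t) \<Rightarrow> ?Phi T1 T2 t" using phi by simp
      next
        fix x assume "case x of (T1,T2,t) \<Rightarrow> ?Phi T1 T2 t"
        moreover obtain a b c where "x = (a,b,c)" by (cases x) auto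
        ultimately show "x = (T1,T2,t)" using un[of a b c] unfolding T1_def T2_def t_def by simp
      qed
    next
      show "\<forall>T1 T2 t. ?Phi T1 T2 t \<longrightarrow> 1 \<in> verts T \<longrightarrow> 1 \<in> verts T2"
      proof (intro allI impI)
        fix T1' T2' t' assume h: "?Phi T1' T2' t'" and one: "1 \<in> verts T"
        have "verts T1' = W1 MM" using un[OF h] by blast
        moreover have "verts T = verts T1' \<union> verts T2'" using h spV by blast
        ultimately show "1 \<in> verts T2'" using one_not_W1[OF one] one by blast
      qed
    qed
  qed
  have partB: "irreducible_tree P T \<longrightarrow>
        (\<exists>!(T1,T2,t). pi_inc_tree P T1 \<and> pi_inc_tree P T2
            \<and> verts T1 \<inter> verts T2 = {} \<and> m \<in> verts T1 \<and> t \<in> verts T2 \<and> M \<in> verts T2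
            \<and> t < m \<and> irreducible_tree P T1 \<and> irreducible_tree P T2
            \<and> T = spl T1 m T2 t)"
  proof
    assume irr: "irreducible_tree P T"
    have cM: "dep_connected P T MM" using irr unfolding irreducible_tree_def MM_def by simp
    interpret irrl T r P by unfold_locales (rule cM)
    have mm: "m = mm" unfolding m_def mm_def MM_def ..
    define T1 where "T1 = restr T mm (W1 mm)"
    define T2 where "T2 = restr T mm (V - W1 mm)"
    define t where "t = Max (chain T mm \<inter> (V - W1 mm))"
    have G: "pi_inc_tree P T1 \<and> pi_inc_tree P T2 \<and> verts T1 \<inter> verts T2 = {} \<and> mm \<in> verts T1
      \<and> t \<in> verts T2 \<and> t < mm \<and> T = spl T1 mm T2 t \<and> dep_connected P T1 mm
      \<and> verts T1 = W1 mm \<and> verts T2 = V - W1 mm"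
      unfolding T1_def T2_def t_def by (rule G_ex[OF mmV W1ne])
    have g: "pi_inc_tree P T1" "pi_inc_tree P T2" "verts T1 \<inter> verts T2 = {}" "mm \<in> verts T1"
      "t \<in> verts T2" "t < mm" "T = spl T1 mm T2 t" "dep_connected P T1 mm"
      "verts T1 = W1 mm" "verts T2 = V - W1 mm" using G by blast+
    have irr2: "dep_connected P T2 (Max (verts T2))" unfolding T2_def using T2_irr g(2) T2_def by simp
    let ?Phi = "\<lambda>T1 T2 t. pi_inc_tree P T1 \<and> pi_inc_tree P T2
            \<and> verts T1 \<inter> verts T2 = {} \<and> m \<in> verts T1 \<and> t \<in> verts T2 \<and> M \<in> verts T2
            \<and> t < m \<and> irreducible_tree P T1 \<and> irreducible_tree P T2
            \<and> T = spl T1 m T2 t"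
    have M2: "MM \<in> verts T2" using g(10) M_notW1 MV by simp
    have mx1: "Max (verts T1) = mm" using g(9) MaxW1 by simp
    have phi: "?Phi T1 T2 t" unfolding irreducible_tree_def mm MM mx1 using g irr2 M2 by simp
    have un: "T1' = T1 \<and> T2' = T2 \<and> t' = t" if h: "?Phi T1' T2' t'" for T1' T2' t'
    proof -
      have h': "pi_inc_tree P T1'" "pi_inc_tree P T2'" "verts T1' \<inter> verts T2' = {}" "mm \<in> verts T1'"
        "t' \<in> verts T2'" "MM \<in> verts T2'" "t' < mm" "irreducible_tree P T1'" "T = spl T1' mm T2' t'"
        using h unfolding MM mm by blast+
      have V1: "verts T1' \<subseteq> V" using spV[OF h'(9)] by blast
      have fin: "finite (verts T1')" using V1 finV finite_subset by blast
      have ub2: "ublk P (verts T2')" using h'(2) unfolding pi_inc_tree_def ublk_def by blast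
      have "PM \<in> blocks_in P (verts T2')" using ublk_blk[OF ub2 h'(6)] .
      hence "PM \<subseteq> verts T2'" using bin_sub by blast
      hence "verts T1' \<subseteq> V - PM" using V1 h'(3) by blast
      hence "\<And>x. x \<in> verts T1' \<Longrightarrow> x \<le> mm" using mm_ge by blast
      hence "Max (verts T1') = mm" using Max_eqI[OF fin _ h'(4)] by blast
      hence c: "dep_connected P T1' mm" using h'(8) unfolding irreducible_tree_def by simp
      note U = G_uniq[OF h'(1,2,3,4,5,7,9) c]
      show ?thesis using U unfolding T1_def T2_def t_def by simp
    qed
    show "\<exists>!(T1,T2,t). ?Phi T1 T2 t"
    proof (rule ex1I[of _ "(T1,T2,t)"])
      show "case (T1,T2,t) of (T1,T2,t) \<Rightarrow> ?Phi T1 T2 t" using phi by simp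
    next
      fix x assume "case x of (T1,T2,t) \<Rightarrow> ?Phi T1 T2 t"
      moreover obtain a b c where "x = (a,b,c)" by (cases x) auto
      ultimately show "x = (T1,T2,t)" using un[of a b c] by simp
    qed
  qed
  show ?thesis using partA partB by blast
qed


end
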